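(* Let $A\subseteq\mathcal{R}$ be outer measurable and let $(J_n)_{n\ge1}$ be a sequence of pairwise disjoint intervals in $\mathcal{R}$ with $\lim_{n\to\infty}l(J_n)=0$. Then $A\cap\bigcup_{n=1}^\infty J_n$ is outer measurable, the series $\sum_{n=1}^\infty M_u(A\cap J_n)$ converges in $\mathcal{R}$, and $$M_u\Big(A\cap\bigcup_{n=1}^\infty J_n\Big)=\sum_{n=1}^\infty M_u(A\cap J_n).$$
   Context: $\mathcal{R}$ denotes the Levi-Civita field: functions $x:\mathbb{Q}\to\mathbb{R}$ with left-finite support, with componentwise addition and formal power series multiplication, ordered by $x>0$ iff $x\ne0$ and $x[\min\operatorname{supp}x]>0$; it is a non-Archimedean ordered field extension of $\mathbb{R}$, Cauchy complete in the order topology, in which all limits and series are taken (a series $\sum a_n$ converges iff $a_n\to0$). An interval is a set $[a,b],[a,b),(a,b]$ or $(a,b)$ with $a<b$ in $\mathcal{R}$, of length $l=b-a$. A cover of $A\subseteq\mathcal{R}$ is a sequence of intervals $(S_n)_{n\ge1}$ with $A\subseteq\bigcup_n S_n$ and $\sum_n l(S_n)$ convergent in $\mathcal{R}$. $A$ is called outer measurable if the infimum $\inf\{\sum_n l(S_n): (S_n)\text{ a cover of }A\}$ exists in $\mathcal{R}$; this infimum is then called the outer measure $M_u(A)$. (Intersections of an outer measurable set with an interval are outer measurable.) *)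

theory Defs
  imports Main "HOL.Real"
begin

section \<open>The Levi-Civita field\<close>

typedef lc = "{x :: rat \<Rightarrow> real. \<forall>q. finite {r. r < q \<and> x r \<noteq> 0}}"
  morphisms lc_coeff Abs_lc
  by (rule exI[of _ "\<lambda>_. 0"]) simp

definition lc_zero :: lc where
  "lc_zero = Abs_lc (\<lambda>_. 0)"

definition lc_add :: "lc \<Rightarrow> lc \<Rightarrow> lc" where
  "lc_add x y = Abs_lc (\<lambda>q. lc_coeff x q + lc_coeff y q)"

definition lc_neg :: "lc \<Rightarrow> lc" where
  "lc_neg x = Abs_lc (\<lambda>q. - lc_coeff x q)"

definition lc_sub :: "lc \<Rightarrow> lc \<Rightarrow> lc" where
  "lc_sub x y = lc_add x (lc_neg y)"

text \<open>Formal power series (Cauchy) product; the sum is finite by left-finiteness.\<close>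
definition lc_mult :: "lc \<Rightarrow> lc \<Rightarrow> lc" where
  "lc_mult x y = Abs_lc (\<lambda>q. \<Sum>(a,b)\<in>{(a,b). a + b = q \<and> lc_coeff x a \<noteq> 0 \<and> lc_coeff y b \<noteq> 0}.
                                lc_coeff x a * lc_coeff y b)"

definition lc_pos :: "lc \<Rightarrow> bool" where
  "lc_pos x \<longleftrightarrow> (\<exists>q. lc_coeff x q > 0 \<and> (\<forall>r<q. lc_coeff x r = 0))"

definition lc_less :: "lc \<Rightarrow> lc \<Rightarrow> bool" where
  "lc_less x y \<longleftrightarrow> lc_pos (lc_sub y x)"

definition lc_le :: "lc \<Rightarrow> lc \<Rightarrow> bool" where
  "lc_le x y \<longleftrightarrow> x = y \<or> lc_less x y"

definition lc_lim :: "(nat \<Rightarrow> lc) \<Rightarrow> lc \<Rightarrow> bool" where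
  "lc_lim X L \<longleftrightarrow> (\<forall>a b. lc_less a L \<longrightarrow> lc_less L b \<longrightarrow>
      (\<exists>N. \<forall>n\<ge>N. lc_less a (X n) \<and> lc_less (X n) b))"

fun lc_psum :: "(nat \<Rightarrow> lc) \<Rightarrow> nat \<Rightarrow> lc" where
  "lc_psum f 0 = lc_zero"
| "lc_psum f (Suc n) = lc_add (lc_psum f n) (f n)"

definition lc_sums :: "(nat \<Rightarrow> lc) \<Rightarrow> lc \<Rightarrow> bool" where
  "lc_sums f s \<longleftrightarrow> lc_lim (lc_psum f) s"

definition lc_summable :: "(nat \<Rightarrow> lc) \<Rightarrow> bool" where
  "lc_summable f \<longleftrightarrow> (\<exists>s. lc_sums f s)"

definition lc_suminf :: "(nat \<Rightarrow> lc) \<Rightarrow> lc" where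
  "lc_suminf f = (THE s. lc_sums f s)"

definition lc_interval_ab :: "lc \<Rightarrow> lc \<Rightarrow> lc set \<Rightarrow> bool" where
  "lc_interval_ab a b S \<longleftrightarrow> lc_less a b \<and>
     S \<in> {{x. lc_le a x \<and> lc_le x b}, {x. lc_le a x \<and> lc_less x b},
          {x. lc_less a x \<and> lc_le x b}, {x. lc_less a x \<and> lc_less x b}}"

definition lc_interval :: "lc set \<Rightarrow> bool" where
  "lc_interval S \<longleftrightarrow> (\<exists>a b. lc_interval_ab a b S)"

definition lc_len :: "lc set \<Rightarrow> lc" where
  "lc_len S = (THE l. \<exists>a b. lc_interval_ab a b S \<and> l = lc_sub b a)"

definition lc_cover :: "lc set \<Rightarrow> (nat \<Rightarrow> lc set) \<Rightarrow> bool" where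
  "lc_cover A S \<longleftrightarrow> (\<forall>n. lc_interval (S n)) \<and> A \<subseteq> (\<Union>n. S n)
      \<and> lc_summable (\<lambda>n. lc_len (S n))"

definition lc_is_inf :: "lc set \<Rightarrow> lc \<Rightarrow> bool" where
  "lc_is_inf X m \<longleftrightarrow> (\<forall>x\<in>X. lc_le m x) \<and> (\<forall>m'. (\<forall>x\<in>X. lc_le m' x) \<longrightarrow> lc_le m' m)"

definition lc_cover_sums :: "lc set \<Rightarrow> lc set" where
  "lc_cover_sums A = {s. \<exists>S. lc_cover A S \<and> s = lc_suminf (\<lambda>n. lc_len (S n))}"

definition lc_outer_measurable :: "lc set \<Rightarrow> bool" where
  "lc_outer_measurable A \<longleftrightarrow> (\<exists>m. lc_is_inf (lc_cover_sums A) m)"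

definition lc_Mu :: "lc set \<Rightarrow> lc" where
  "lc_Mu A = (THE m. lc_is_inf (lc_cover_sums A) m)"

end

theory Submission
  imports Defs "HOL-Library.Countable_Set"
begin


definition lf :: "(rat \<Rightarrow> real) \<Rightarrow> bool" where
  "lf f \<longleftrightarrow> (\<forall>q. finite {r. r < q \<and> f r \<noteq> 0})"

lemma lf_coeff: "lf (lc_coeff x)"
  using lc_coeff[of x] by (simp add: lf_def)

lemma coeff_Abs: "lf f \<Longrightarrow> lc_coeff (Abs_lc f) = f"
  by (simp add: Abs_lc_inverse lf_def)

lemma lc_ext: "(\<And>r. lc_coeff x r = lc_coeff y r) \<Longrightarrow> x = y"
  by (metis ext lc_coeff_inject)

lemma lf_add: "lf f \<Longrightarrow> lf g \<Longrightarrow> lf (\<lambda>r. f r + g r)"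
  unfolding lf_def
proof
  fix q assume "\<forall>q. finite {r. r < q \<and> f r \<noteq> 0}" "\<forall>q. finite {r. r < q \<and> g r \<noteq> 0}"
  then have "finite ({r. r < q \<and> f r \<noteq> 0} \<union> {r. r < q \<and> g r \<noteq> 0})" by auto
  then show "finite {r. r < q \<and> f r + g r \<noteq> 0}" by (rule finite_subset[rotated]) auto
qed

lemma lf_scale: "lf f \<Longrightarrow> lf (\<lambda>r. c * f r)"
  unfolding lf_def
proof
  fix q assume "\<forall>q. finite {r. r < q \<and> f r \<noteq> 0}"
  then have "finite {r. r < q \<and> f r \<noteq> 0}" by auto
  then show "finite {r. r < q \<and> c * f r \<noteq> 0}" by (rule finite_subset[rotated]) auto
qed

lemma lf_shift: "lf f \<Longrightarrow> lf (\<lambda>r. f (r - s))"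
  unfolding lf_def
proof
  fix q assume "\<forall>q. finite {r. r < q \<and> f r \<noteq> 0}"
  then have "finite ((\<lambda>r. r + s) ` {r. r < q - s \<and> f r \<noteq> 0})" by auto
  moreover have "{r. r < q \<and> f (r - s) \<noteq> 0} \<subseteq> (\<lambda>r. r + s) ` {r. r < q - s \<and> f r \<noteq> 0}"
    by (auto simp: image_iff intro!: exI[of _ "_ - s"])
  ultimately show "finite {r. r < q \<and> f (r - s) \<noteq> 0}" by (rule finite_subset[rotated])
qed

lemma lf_zero: "lf (\<lambda>r. 0)" by (simp add: lf_def)

lemma lf_ind: "lf (\<lambda>r. if r = q then 1 else 0)"
  unfolding lf_def by (auto intro: finite_subset[of _ "{q}"])

lemma coeff_zero[simp]: "lc_coeff lc_zero r = 0"
  by (simp add: lc_zero_def coeff_Abs lf_zero)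

lemma coeff_add[simp]: "lc_coeff (lc_add x y) r = lc_coeff x r + lc_coeff y r"
  by (simp add: lc_add_def coeff_Abs lf_add lf_coeff)

lemma coeff_neg[simp]: "lc_coeff (lc_neg x) r = - lc_coeff x r"
  using lf_scale[OF lf_coeff, of "-1" x]
  by (simp add: lc_neg_def coeff_Abs)

lemma coeff_sub[simp]: "lc_coeff (lc_sub x y) r = lc_coeff x r - lc_coeff y r"
  by (simp add: lc_sub_def)

lemma lc_less_lex: "lc_less x y \<longleftrightarrow> (\<exists>q. lc_coeff x q < lc_coeff y q \<and> (\<forall>r<q. lc_coeff x r = lc_coeff y r))"
  by (auto simp: lc_less_def lc_pos_def)

lemma first_diff:
  assumes "lc_coeff x r0 \<noteq> lc_coeff y r0"
  shows "\<exists>q. lc_coeff x q \<noteq> lc_coeff y q \<and> (\<forall>r<q. lc_coeff x r = lc_coeff y r)"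
proof -
  let ?D = "{r. r \<le> r0 \<and> lc_coeff x r \<noteq> lc_coeff y r}"
  have "?D \<subseteq> {r. r < r0 + 1 \<and> lc_coeff x r \<noteq> 0} \<union> {r. r < r0 + 1 \<and> lc_coeff y r \<noteq> 0}"
    by auto
  moreover have "finite ({r. r < r0 + 1 \<and> lc_coeff x r \<noteq> 0} \<union> {r. r < r0 + 1 \<and> lc_coeff y r \<noteq> 0})"
    using lf_coeff[of x] lf_coeff[of y] by (auto simp: lf_def)
  ultimately have fin: "finite ?D" by (rule finite_subset)
  have ne: "r0 \<in> ?D" using assms by auto
  define q where "q = Min ?D"
  have "q \<in> ?D" unfolding q_def using fin ne Min_in by blast
  moreover have "\<forall>r<q. lc_coeff x r = lc_coeff y r"
  proof (intro allI impI)
    fix r assume "r < q"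
    show "lc_coeff x r = lc_coeff y r"
    proof (rule ccontr)
      assume "lc_coeff x r \<noteq> lc_coeff y r"
      with \<open>r < q\<close> \<open>q \<in> ?D\<close> have "r \<in> ?D" by auto
      then have "q \<le> r" unfolding q_def using fin by simp
      with \<open>r < q\<close> show False by simp
    qed
  qed
  ultimately show ?thesis by blast
qed

instantiation lc :: linordered_ab_group_add
begin
definition zero_lc_def: "0 = lc_zero"
definition plus_lc_def: "x + y = lc_add x y"
definition uminus_lc_def: "- x = lc_neg x"
definition minus_lc_def: "x - y = lc_sub x y"
definition less_lc_def: "x < y \<longleftrightarrow> lc_less x y"
definition less_eq_lc_def: "x \<le> y \<longleftrightarrow> lc_le x y"

lemma lex_irrefl: "\<not> lc_less x x" by (auto simp: lc_less_lex)

lemma lex_trans: "lc_less x y \<Longrightarrow> lc_less y z \<Longrightarrow> lc_less x z"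
  unfolding lc_less_lex
proof (elim exE conjE)
  fix q1 q2 assume a: "lc_coeff x q1 < lc_coeff y q1" "\<forall>r<q1. lc_coeff x r = lc_coeff y r"
    and b: "lc_coeff y q2 < lc_coeff z q2" "\<forall>r<q2. lc_coeff y r = lc_coeff z r"
  show "\<exists>q. lc_coeff x q < lc_coeff z q \<and> (\<forall>r<q. lc_coeff x r = lc_coeff z r)"
  proof (cases q1 q2 rule: linorder_cases)
    case less thus ?thesis using a b by (intro exI[of _ q1]) auto
  next
    case equal thus ?thesis using a b by (intro exI[of _ q1]) auto
  next
    case greater thus ?thesis using a b by (intro exI[of _ q2]) auto
  qed
qed

lemma lex_asym: "lc_less x y \<Longrightarrow> \<not> lc_less y x"
  using lex_trans lex_irrefl by blast

lemma lex_total: "x \<noteq> y \<Longrightarrow> lc_less x y \<or> lc_less y x"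
proof -
  assume "x \<noteq> y"
  then obtain r0 where "lc_coeff x r0 \<noteq> lc_coeff y r0" using lc_ext by blast
  from first_diff[OF this] obtain q where q: "lc_coeff x q \<noteq> lc_coeff y q" "\<forall>r<q. lc_coeff x r = lc_coeff y r"
    by blast
  show ?thesis
  proof (cases "lc_coeff x q < lc_coeff y q")
    case True thus ?thesis using q by (auto simp: lc_less_lex)
  next
    case False
    then have "lc_coeff y q < lc_coeff x q" using q by auto
    thus ?thesis using q by (auto simp: lc_less_lex)
  qed
qed

instance
proof
  fix x y z :: lc
  show "(x < y) = (x \<le> y \<and> \<not> y \<le> x)"
    unfolding less_lc_def less_eq_lc_def lc_le_def using lex_asym lex_irrefl by blast
  show "x \<le> x" by (simp add: less_eq_lc_def lc_le_def)
  show "x \<le> y \<Longrightarrow> y \<le> z \<Longrightarrow> x \<le> z"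
    unfolding less_eq_lc_def lc_le_def using lex_trans by blast
  show "x \<le> y \<Longrightarrow> y \<le> x \<Longrightarrow> x = y"
    unfolding less_eq_lc_def lc_le_def using lex_asym by blast
  show "x \<le> y \<or> y \<le> x"
    unfolding less_eq_lc_def lc_le_def using lex_total by blast
  show "x + y + z = x + (y + z)" by (rule lc_ext) (simp add: plus_lc_def)
  show "x + y = y + x" by (rule lc_ext) (simp add: plus_lc_def)
  show "0 + x = x" by (rule lc_ext) (simp add: plus_lc_def zero_lc_def)
  show "- x + x = 0" by (rule lc_ext) (simp add: plus_lc_def zero_lc_def uminus_lc_def)
  show "x - y = x + - y" by (rule lc_ext) (simp add: plus_lc_def minus_lc_def uminus_lc_def)
  show "x \<le> y \<Longrightarrow> z + x \<le> z + y"
    unfolding less_eq_lc_def lc_le_def lc_less_lex plus_lc_def by auto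
qed
end

lemma c_add[simp]: "lc_coeff (x + y) r = lc_coeff x r + lc_coeff y r"
  by (simp add: plus_lc_def)
lemma c_neg[simp]: "lc_coeff (- x) r = - lc_coeff x r"
  by (simp add: uminus_lc_def)
lemma c_diff[simp]: "lc_coeff (x - y) r = lc_coeff x r - lc_coeff y r"
  by (simp add: minus_lc_def)
lemma c_zero[simp]: "lc_coeff 0 r = 0"
  by (simp add: zero_lc_def)
lemma c_sum: "lc_coeff (sum f F) r = (\<Sum>i\<in>F. lc_coeff (f i) r)"
  by (induction F rule: infinite_finite_induct) auto

lemma less_lex: "x < y \<longleftrightarrow> (\<exists>q. lc_coeff x q < lc_coeff y q \<and> (\<forall>r<q. lc_coeff x r = lc_coeff y r))"
  by (simp add: less_lc_def lc_less_lex)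

lemma pos_lex: "0 < x \<longleftrightarrow> (\<exists>q. 0 < lc_coeff x q \<and> (\<forall>r<q. lc_coeff x r = 0))"
  by (simp add: less_lex)


definition small :: "lc \<Rightarrow> rat \<Rightarrow> bool" where
  "small x q \<longleftrightarrow> (\<forall>r<q. lc_coeff x r = 0)"

lemma small_add: "small x q \<Longrightarrow> small y q \<Longrightarrow> small (x + y) q" by (simp add: small_def)
lemma small_neg: "small x q \<Longrightarrow> small (- x) q" by (simp add: small_def)
lemma small_diff: "small x q \<Longrightarrow> small y q \<Longrightarrow> small (x - y) q" by (simp add: small_def)
lemma small_zero[simp]: "small 0 q" by (simp add: small_def)
lemma small_le: "small x q \<Longrightarrow> q' \<le> q \<Longrightarrow> small x q'" by (simp add: small_def)
lemma small_sum: "(\<And>i. i \<in> F \<Longrightarrow> small (f i) q) \<Longrightarrow> small (sum f F) q"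
  by (simp add: small_def c_sum)
lemma small_diff_eq: "small (x - y) q \<Longrightarrow> r < q \<Longrightarrow> lc_coeff x r = lc_coeff y r"
  by (simp add: small_def)
lemma small_all_eq: "(\<And>q. small x q) \<Longrightarrow> x = 0"
proof (rule lc_ext)
  fix r assume "\<And>q. small x q"
  then have "small x (r + 1)" by blast
  then show "lc_coeff x r = lc_coeff 0 r" by (simp add: small_def)
qed

lemma lead: "x \<noteq> 0 \<Longrightarrow> \<exists>q. lc_coeff x q \<noteq> 0 \<and> (\<forall>r<q. lc_coeff x r = 0)"
proof -
  assume "x \<noteq> 0"
  then obtain r where "lc_coeff x r \<noteq> lc_coeff 0 r" using lc_ext by blast
  from first_diff[OF this] show ?thesis by simp
qed

lemma small_mono:
  assumes "0 \<le> x" "x \<le> y" "small y q" shows "small x q"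
proof (rule ccontr)
  assume "\<not> small x q"
  then obtain r where r: "r < q" "lc_coeff x r \<noteq> 0" by (auto simp: small_def)
  then have "x \<noteq> 0" by auto
  with assms have "0 < x" by auto
  then obtain q0 where q0: "0 < lc_coeff x q0" "\<forall>r<q0. lc_coeff x r = 0" by (auto simp: pos_lex)
  have "q0 \<le> r" using q0(2) r(2) by (meson not_le)
  then have "q0 < q" using r by simp
  then have "y < x" unfolding less_lex using q0 assms(3)
    by (intro exI[of _ q0]) (auto simp: small_def)
  with assms show False by simp
qed

lemma small_lt:
  assumes "0 < e" shows "\<exists>q. \<forall>x. small x q \<longrightarrow> x < e \<and> - e < x"
proof -
  obtain q0 where q0: "0 < lc_coeff e q0" "\<forall>r<q0. lc_coeff e r = 0" using assms by (auto simp: pos_lex)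
  show ?thesis
  proof (intro exI[of _ "q0 + 1"] allI impI conjI)
    fix x assume x: "small x (q0 + 1)"
    show "x < e" unfolding less_lex using q0 x by (intro exI[of _ q0]) (auto simp: small_def)
    show "- e < x" unfolding less_lex using q0 x by (intro exI[of _ q0]) (auto simp: small_def)
  qed
qed

definition ind :: "rat \<Rightarrow> lc" where "ind q = Abs_lc (\<lambda>r. if r = q then 1 else 0)"

lemma c_ind: "lc_coeff (ind q) r = (if r = q then 1 else 0)"
  by (simp add: ind_def coeff_Abs lf_ind)

lemma ind_pos: "0 < ind q"
  unfolding pos_lex by (intro exI[of _ q]) (simp add: c_ind)

lemma ind_anti: "q < q' \<Longrightarrow> ind q' < ind q"
  unfolding less_lex by (intro exI[of _ q]) (auto simp: c_ind)

lemma ind_small: "small (ind q) q" by (simp add: small_def c_ind)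

lemma small_of_bounds:
  assumes "- ind q < y" "y < ind q" shows "small y q"
proof (rule ccontr)
  assume "\<not> small y q"
  then obtain r where r: "r < q" "lc_coeff y r \<noteq> 0" by (auto simp: small_def)
  then have "y \<noteq> 0" by auto
  from lead[OF this] obtain q1 where q1: "lc_coeff y q1 \<noteq> 0" "\<forall>r<q1. lc_coeff y r = 0" by blast
  have "q1 \<le> r" using q1(2) r(2) by (meson not_le)
  then have "q1 < q" using r by simp
  show False
  proof (cases "0 < lc_coeff y q1")
    case True
    then have "ind q < y" unfolding less_lex using q1 \<open>q1 < q\<close>
      by (intro exI[of _ q1]) (auto simp: c_ind)
    with assms show False by simp
  next
    case False
    then have "y < - ind q" unfolding less_lex using q1 \<open>q1 < q\<close>
      by (intro exI[of _ q1]) (auto simp: c_ind)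
    with assms show False by simp
  qed
qed

definition hf :: "lc \<Rightarrow> lc" where "hf x = Abs_lc (\<lambda>r. (1/2) * lc_coeff x r)"

lemma c_hf: "lc_coeff (hf x) r = lc_coeff x r / 2"
  unfolding hf_def by (subst coeff_Abs[OF lf_scale[OF lf_coeff]]) simp

lemma hf_hf: "hf x + hf x = x"
  by (rule lc_ext) (simp add: c_hf)

lemma hf_pos: "0 < x \<Longrightarrow> 0 < hf x"
  unfolding pos_lex by (auto simp: c_hf)

lemma hf_less: "0 < x \<Longrightarrow> hf x < x"
  using hf_pos[of x] hf_hf[of x] by (metis add_less_cancel_left add.right_neutral)

lemma dense_lc: "a < (b::lc) \<Longrightarrow> \<exists>z. a < z \<and> z < b"
proof -
  assume "a < b"
  then have "0 < b - a" by simp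
  then have "0 < hf (b - a)" "hf (b - a) < b - a" using hf_pos hf_less by auto
  then show ?thesis by (intro exI[of _ "a + hf (b - a)"]) (auto simp: algebra_simps)
qed

definition sh :: "rat \<Rightarrow> lc \<Rightarrow> lc" where "sh s x = Abs_lc (\<lambda>r. lc_coeff x (r - s))"

lemma c_sh: "lc_coeff (sh s x) r = lc_coeff x (r - s)"
  by (simp add: sh_def coeff_Abs lf_shift lf_coeff)

lemma sh_pos: "0 < x \<Longrightarrow> 0 < sh s x"
proof -
  assume "0 < x"
  then obtain q where "0 < lc_coeff x q" "\<forall>r<q. lc_coeff x r = 0" by (auto simp: pos_lex)
  then show ?thesis unfolding pos_lex
    by (intro exI[of _ "q + s"]) (auto simp: c_sh)
qed

section \<open>Limits\<close>

lemma lim_iff: "lc_lim X L \<longleftrightarrow> (\<forall>q. \<exists>N. \<forall>n\<ge>N. small (X n - L) q)"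
proof
  assume a: "lc_lim X L"
  show "\<forall>q. \<exists>N. \<forall>n\<ge>N. small (X n - L) q"
  proof
    fix q
    have "lc_less (L - ind q) L" "lc_less L (L + ind q)"
      using ind_pos[of q] by (auto simp: less_lc_def[symmetric])
    with a obtain N where N: "\<forall>n\<ge>N. lc_less (L - ind q) (X n) \<and> lc_less (X n) (L + ind q)"
      unfolding lc_lim_def by blast
    show "\<exists>N. \<forall>n\<ge>N. small (X n - L) q"
    proof (intro exI allI impI)
      fix n assume "N \<le> n"
      with N have "L - ind q < X n" "X n < L + ind q" by (auto simp: less_lc_def)
      then show "small (X n - L) q" by (intro small_of_bounds) (auto simp: algebra_simps)
    qed
  qed
next
  assume a: "\<forall>q. \<exists>N. \<forall>n\<ge>N. small (X n - L) q"
  show "lc_lim X L" unfolding lc_lim_def less_lc_def[symmetric]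
  proof (intro allI impI)
    fix u v assume uv: "u < L" "L < v"
    define e where "e = min (L - u) (v - L)"
    have "0 < e" using uv by (simp add: e_def)
    from small_lt[OF this] obtain q where q: "\<forall>x. small x q \<longrightarrow> x < e \<and> - e < x" by blast
    from a obtain N where N: "\<forall>n\<ge>N. small (X n - L) q" by blast
    show "\<exists>N. \<forall>n\<ge>N. u < X n \<and> X n < v"
    proof (intro exI allI impI)
      fix n assume "N \<le> n"
      with N q have "X n - L < e" "- e < X n - L" by auto
      moreover have "e \<le> L - u" "e \<le> v - L" by (simp_all add: e_def)
      ultimately have "X n - L < v - L" "- (L - u) < X n - L"
        using less_le_trans[of "X n - L" e "v - L"] le_less_trans[of "- (L - u)" "- e" "X n - L"] neg_le_iff_le[of e "L - u"] by auto
      then show "u < X n \<and> X n < v" by (simp add: algebra_simps)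
    qed
  qed
qed

lemma lim_unique: "lc_lim X L \<Longrightarrow> lc_lim X L' \<Longrightarrow> L = L'"
proof -
  assume a: "lc_lim X L" "lc_lim X L'"
  have "small (L' - L) q" for q
  proof -
    obtain N1 where "\<forall>n\<ge>N1. small (X n - L) q" using a lim_iff by blast
    moreover obtain N2 where "\<forall>n\<ge>N2. small (X n - L') q" using a lim_iff by blast
    ultimately have "small (X (max N1 N2) - L) q" "small (X (max N1 N2) - L') q" by auto
    from small_diff[OF this] show ?thesis by simp
  qed
  then have "L' - L = 0" by (rule small_all_eq)
  then show ?thesis by simp
qed

lemma lim_le: "lc_lim X L \<Longrightarrow> (\<And>n. X n \<le> B) \<Longrightarrow> L \<le> B"
proof (rule ccontr)
  assume a: "lc_lim X L" "\<And>n. X n \<le> B" "\<not> L \<le> B"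
  then have "0 < L - B" by simp
  from small_lt[OF this] obtain q where q: "\<forall>x. small x q \<longrightarrow> x < L - B \<and> - (L - B) < x" by blast
  obtain N where "\<forall>n\<ge>N. small (X n - L) q" using a lim_iff by blast
  then have "- (L - B) < X N - L" using q by auto
  then have "B < X N" by (simp add: algebra_simps)
  with a show False by (meson not_le)
qed

lemma lim_ge: "lc_lim X L \<Longrightarrow> (\<And>n. B \<le> X n) \<Longrightarrow> B \<le> L"
proof (rule ccontr)
  assume a: "lc_lim X L" "\<And>n. B \<le> X n" "\<not> B \<le> L"
  then have "0 < B - L" by simp
  from small_lt[OF this] obtain q where q: "\<forall>x. small x q \<longrightarrow> x < B - L \<and> - (B - L) < x" by blast
  obtain N where "\<forall>n\<ge>N. small (X n - L) q" using a lim_iff by blast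
  then have "X N - L < B - L" using q by auto
  then have "X N < B" by (simp add: algebra_simps)
  with a show False by (meson not_le)
qed


definition fsum :: "'i set \<Rightarrow> ('i \<Rightarrow> lc) \<Rightarrow> bool" where
  "fsum I a \<longleftrightarrow> (\<forall>q. finite {i\<in>I. \<not> small (a i) q})"

definition tot :: "'i set \<Rightarrow> ('i \<Rightarrow> lc) \<Rightarrow> lc" where
  "tot I a = Abs_lc (\<lambda>r. \<Sum>i\<in>{i\<in>I. lc_coeff (a i) r \<noteq> 0}. lc_coeff (a i) r)"

lemma fsum_fin_r: "fsum I a \<Longrightarrow> finite {i\<in>I. lc_coeff (a i) r \<noteq> 0}"
proof -
  assume "fsum I a"
  then have "finite {i\<in>I. \<not> small (a i) (r + 1)}" by (simp add: fsum_def)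
  then show ?thesis by (rule finite_subset[rotated]) (auto simp: small_def intro!: exI[of _ r])
qed

lemma lf_tot: "fsum I a \<Longrightarrow> lf (\<lambda>r. \<Sum>i\<in>{i\<in>I. lc_coeff (a i) r \<noteq> 0}. lc_coeff (a i) r)"
  unfolding lf_def
proof
  fix q assume fs: "fsum I a"
  let ?F = "{i\<in>I. \<not> small (a i) q}"
  have finF: "finite ?F" using fs by (simp add: fsum_def)
  have "{r. r < q \<and> (\<Sum>i\<in>{i\<in>I. lc_coeff (a i) r \<noteq> 0}. lc_coeff (a i) r) \<noteq> 0}
        \<subseteq> (\<Union>i\<in>?F. {r. r < q \<and> lc_coeff (a i) r \<noteq> 0})"
  proof
    fix r assume "r \<in> {r. r < q \<and> (\<Sum>i\<in>{i\<in>I. lc_coeff (a i) r \<noteq> 0}. lc_coeff (a i) r) \<noteq> 0}"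
    then have r: "r < q" "(\<Sum>i\<in>{i\<in>I. lc_coeff (a i) r \<noteq> 0}. lc_coeff (a i) r) \<noteq> 0" by auto
    have "\<exists>i. i \<in> I \<and> lc_coeff (a i) r \<noteq> 0"
    proof (rule ccontr)
      assume "\<not> (\<exists>i. i \<in> I \<and> lc_coeff (a i) r \<noteq> 0)"
      then have "{i\<in>I. lc_coeff (a i) r \<noteq> 0} = {}" by auto
      with r show False by simp
    qed
    then obtain i where "i \<in> I" "lc_coeff (a i) r \<noteq> 0" by blast
    then show "r \<in> (\<Union>i\<in>?F. {r. r < q \<and> lc_coeff (a i) r \<noteq> 0})"
      using r by (auto simp: small_def)
  qed
  moreover have "finite (\<Union>i\<in>?F. {r. r < q \<and> lc_coeff (a i) r \<noteq> 0})"
    using finF lf_coeff by (auto simp: lf_def)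
  ultimately show "finite {r. r < q \<and> (\<Sum>i\<in>{i\<in>I. lc_coeff (a i) r \<noteq> 0}. lc_coeff (a i) r) \<noteq> 0}"
    by (rule finite_subset)
qed

lemma c_tot: "fsum I a \<Longrightarrow> lc_coeff (tot I a) r = (\<Sum>i\<in>{i\<in>I. lc_coeff (a i) r \<noteq> 0}. lc_coeff (a i) r)"
  unfolding tot_def by (subst coeff_Abs[OF lf_tot]) auto

lemma c_tot_gen:
  assumes "fsum I a" "finite F" "F \<subseteq> I" "\<And>i. i \<in> I - F \<Longrightarrow> lc_coeff (a i) r = 0"
  shows "lc_coeff (tot I a) r = (\<Sum>i\<in>F. lc_coeff (a i) r)"
  unfolding c_tot[OF assms(1)]
  by (rule sum.mono_neutral_left) (use assms in auto)

lemma c_tot_trunc: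
  assumes "fsum I a" "finite F" "F \<subseteq> I" "{i\<in>I. \<not> small (a i) q} \<subseteq> F" "r < q"
  shows "lc_coeff (tot I a) r = lc_coeff (sum a F) r"
  unfolding c_sum
  by (rule c_tot_gen) (use assms in \<open>auto simp: small_def\<close>)

lemma fsum_finite: "finite I \<Longrightarrow> fsum I a"
  by (simp add: fsum_def)

lemma fsum_subset: "fsum I a \<Longrightarrow> J \<subseteq> I \<Longrightarrow> fsum J a"
  unfolding fsum_def
proof
  fix q assume "\<forall>q. finite {i \<in> I. \<not> small (a i) q}" "J \<subseteq> I"
  then have "finite {i \<in> I. \<not> small (a i) q}" by blast
  then show "finite {i \<in> J. \<not> small (a i) q}" by (rule finite_subset[rotated]) (use \<open>J \<subseteq> I\<close> in auto)
qed

lemma fsum_cong: "fsum I a \<Longrightarrow> (\<And>i. i \<in> I \<Longrightarrow> a i = b i) \<Longrightarrow> fsum I b"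
proof -
  assume a: "fsum I a" "\<And>i. i \<in> I \<Longrightarrow> a i = b i"
  have "{i \<in> I. \<not> small (b i) q} = {i \<in> I. \<not> small (a i) q}" for q using a(2) by auto
  then show ?thesis using a(1) by (simp add: fsum_def)
qed

lemma tot_cong: "(\<And>i. i \<in> I \<Longrightarrow> a i = b i) \<Longrightarrow> tot I a = tot I b"
proof -
  assume a: "\<And>i. i \<in> I \<Longrightarrow> a i = b i"
  have "(\<lambda>r. \<Sum>i\<in>{i\<in>I. lc_coeff (a i) r \<noteq> 0}. lc_coeff (a i) r) = (\<lambda>r. \<Sum>i\<in>{i\<in>I. lc_coeff (b i) r \<noteq> 0}. lc_coeff (b i) r)"
  proof
    fix r
    have "{i\<in>I. lc_coeff (a i) r \<noteq> 0} = {i\<in>I. lc_coeff (b i) r \<noteq> 0}" using a by auto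
    then show "(\<Sum>i\<in>{i\<in>I. lc_coeff (a i) r \<noteq> 0}. lc_coeff (a i) r) = (\<Sum>i\<in>{i\<in>I. lc_coeff (b i) r \<noteq> 0}. lc_coeff (b i) r)"
      using a by (intro sum.cong) auto
  qed
  then show ?thesis by (simp add: tot_def)
qed

lemma tot_support:
  assumes "finite F" "F \<subseteq> I" "\<And>i. i \<in> I - F \<Longrightarrow> a i = 0"
  shows "fsum I a" "tot I a = sum a F"
proof -
  show fs: "fsum I a" unfolding fsum_def
  proof
    fix q
    have "{i \<in> I. \<not> small (a i) q} \<subseteq> F"
    proof
      fix i assume i: "i \<in> {i \<in> I. \<not> small (a i) q}"
      show "i \<in> F"
      proof (rule ccontr)
        assume "i \<notin> F"
        then have "a i = 0" using i assms(3) by auto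
        then show False using i by simp
      qed
    qed
    then show "finite {i \<in> I. \<not> small (a i) q}" using assms(1) by (rule finite_subset)
  qed
  show "tot I a = sum a F"
    by (rule lc_ext, subst c_tot_gen[OF fs assms(1,2)]) (use assms in \<open>auto simp: c_sum\<close>)
qed

lemma tot_finite: "finite I \<Longrightarrow> tot I a = sum a I"
  using tot_support[of I I a] by auto

lemma tot_empty[simp]: "tot {} a = 0"
  by (simp add: tot_finite)

lemma tot_zero: "tot I (\<lambda>_. 0) = 0"
  using tot_support[of "{}" I "\<lambda>_. 0"] by simp

lemma tot_mono:
  assumes fa: "fsum I a" and fb: "fsum I b" and le: "\<And>i. i \<in> I \<Longrightarrow> a i \<le> b i"
  shows "tot I a \<le> tot I b"
proof (rule ccontr)
  assume "\<not> tot I a \<le> tot I b"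
  then have "tot I b < tot I a" by simp
  then obtain q where q: "lc_coeff (tot I b) q < lc_coeff (tot I a) q"
    "\<forall>r<q. lc_coeff (tot I b) r = lc_coeff (tot I a) r" by (auto simp: less_lex)
  define F where "F = {i\<in>I. \<not> small (a i) (q+1)} \<union> {i\<in>I. \<not> small (b i) (q+1)}"
  have finF: "finite F" "F \<subseteq> I" using fa fb by (auto simp: F_def fsum_def)
  have ea: "lc_coeff (tot I a) r = lc_coeff (sum a F) r" if "r < q + 1" for r
    by (rule c_tot_trunc[OF fa finF]) (use that in \<open>auto simp: F_def\<close>)
  have eb: "lc_coeff (tot I b) r = lc_coeff (sum b F) r" if "r < q + 1" for r
    by (rule c_tot_trunc[OF fb finF]) (use that in \<open>auto simp: F_def\<close>)
  have "sum b F < sum a F" unfolding less_lex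
    using q ea eb by (intro exI[of _ q]) auto
  moreover have "sum a F \<le> sum b F" using le finF by (intro sum_mono) auto
  ultimately show False by simp
qed

lemma tot_nonneg: "fsum I a \<Longrightarrow> (\<And>i. i \<in> I \<Longrightarrow> 0 \<le> a i) \<Longrightarrow> 0 \<le> tot I a"
  using tot_mono[of I "\<lambda>_. 0" a] tot_zero[of I] fsum_finite[of "{}"] tot_support(1)[of "{}" I "\<lambda>_. 0"]
  by auto

lemma fsum_add: "fsum I a \<Longrightarrow> fsum I b \<Longrightarrow> fsum I (\<lambda>i. a i + b i)"
  unfolding fsum_def
proof
  fix q assume "\<forall>q. finite {i \<in> I. \<not> small (a i) q}" "\<forall>q. finite {i \<in> I. \<not> small (b i) q}"
  then have "finite ({i \<in> I. \<not> small (a i) q} \<union> {i \<in> I. \<not> small (b i) q})" by auto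
  then show "finite {i \<in> I. \<not> small (a i + b i) q}"
    by (rule finite_subset[rotated]) (auto dest: small_add)
qed

lemma tot_add:
  assumes fa: "fsum I a" and fb: "fsum I b"
  shows "tot I (\<lambda>i. a i + b i) = tot I a + tot I b"
proof (rule lc_ext)
  fix r
  define F where "F = {i\<in>I. lc_coeff (a i) r \<noteq> 0} \<union> {i\<in>I. lc_coeff (b i) r \<noteq> 0}"
  have finF: "finite F" "F \<subseteq> I" using fsum_fin_r[OF fa] fsum_fin_r[OF fb] by (auto simp: F_def)
  show "lc_coeff (tot I (\<lambda>i. a i + b i)) r = lc_coeff (tot I a + tot I b) r"
    apply (simp only: c_add)
    apply (subst c_tot_gen[OF fsum_add[OF fa fb] finF])
     apply (simp add: F_def)
    apply (subst c_tot_gen[OF fa finF])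
     apply (simp add: F_def)
    apply (subst c_tot_gen[OF fb finF])
     apply (simp add: F_def)
    apply (simp add: sum.distrib)
    done
qed

lemma fsum_neg: "fsum I a \<Longrightarrow> fsum I (\<lambda>i. - a i)"
  unfolding fsum_def
  by (metis (no_types, lifting) Collect_cong small_neg minus_minus)

lemma tot_neg: "fsum I a \<Longrightarrow> tot I (\<lambda>i. - a i) = - tot I a"
proof -
  assume "fsum I a"
  then have "tot I a + tot I (\<lambda>i. - a i) = 0"
    using tot_add[of I a "\<lambda>i. - a i"] fsum_neg[of I a] tot_zero[of I] by simp
  then show ?thesis by (rule minus_unique[symmetric])
qed

lemma fsum_sum: "finite K \<Longrightarrow> (\<And>k. k \<in> K \<Longrightarrow> fsum I (a k)) \<Longrightarrow> fsum I (\<lambda>i. \<Sum>k\<in>K. a k i)"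
proof (induction K rule: finite_induct)
  case empty thus ?case using tot_support(1)[of "{}" I "\<lambda>_. 0"] by simp
next
  case (insert k K) thus ?case by (simp add: fsum_add)
qed

lemma tot_sum: "finite K \<Longrightarrow> (\<And>k. k \<in> K \<Longrightarrow> fsum I (a k)) \<Longrightarrow> tot I (\<lambda>i. \<Sum>k\<in>K. a k i) = (\<Sum>k\<in>K. tot I (a k))"
proof (induction K rule: finite_induct)
  case empty thus ?case by (simp add: tot_zero)
next
  case (insert k K) thus ?case by (simp add: tot_add fsum_sum)
qed

lemma tot_union:
  assumes fs: "fsum (I \<union> J) a" and dj: "I \<inter> J = {}"
  shows "tot (I \<union> J) a = tot I a + tot J a"
proof (rule lc_ext)
  fix r
  have fI: "fsum I a" and fJ: "fsum J a" using fs fsum_subset by blast+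
  define F where "F = {i\<in>I \<union> J. lc_coeff (a i) r \<noteq> 0}"
  have finF: "finite F" using fsum_fin_r[OF fs] by (simp add: F_def)
  have "lc_coeff (tot (I \<union> J) a) r = (\<Sum>i\<in>F. lc_coeff (a i) r)"
    by (rule c_tot_gen[OF fs finF]) (auto simp: F_def)
  also have "\<dots> = (\<Sum>i\<in>F \<inter> I. lc_coeff (a i) r) + (\<Sum>i\<in>F \<inter> J. lc_coeff (a i) r)"
  proof -
    have "F = (F \<inter> I) \<union> (F \<inter> J)" by (auto simp: F_def)
    then show ?thesis using sum.union_disjoint[of "F \<inter> I" "F \<inter> J" "\<lambda>i. lc_coeff (a i) r"] finF dj
      by auto
  qed
  also have "(\<Sum>i\<in>F \<inter> I. lc_coeff (a i) r) = lc_coeff (tot I a) r"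
    by (rule c_tot_gen[OF fI, symmetric]) (use finF in \<open>auto simp: F_def\<close>)
  also have "(\<Sum>i\<in>F \<inter> J. lc_coeff (a i) r) = lc_coeff (tot J a) r"
    by (rule c_tot_gen[OF fJ, symmetric]) (use finF in \<open>auto simp: F_def\<close>)
  finally show "lc_coeff (tot (I \<union> J) a) r = lc_coeff (tot I a + tot J a) r" by simp
qed

lemma fsum_reindex:
  assumes bij: "bij_betw g J I" and fs: "fsum I a"
  shows "fsum J (a \<circ> g)"
  unfolding fsum_def
proof
  fix q
  have "inj_on g {j\<in>J. \<not> small (a (g j)) q}" using bij by (auto simp: bij_betw_def inj_on_def)
  moreover have "g ` {j\<in>J. \<not> small (a (g j)) q} \<subseteq> {i\<in>I. \<not> small (a i) q}"
    using bij by (auto simp: bij_betw_def)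
  moreover have "finite {i\<in>I. \<not> small (a i) q}" using fs by (simp add: fsum_def)
  ultimately have "finite {j\<in>J. \<not> small (a (g j)) q}"
    using finite_imageD finite_subset by blast
  then show "finite {j \<in> J. \<not> small ((a \<circ> g) j) q}" by simp
qed

lemma tot_reindex:
  assumes bij: "bij_betw g J I" and fs: "fsum I a"
  shows "tot J (a \<circ> g) = tot I a"
proof (rule lc_ext)
  fix r
  have fJ: "fsum J (a \<circ> g)" by (rule fsum_reindex[OF bij fs])
  define FJ where "FJ = {j\<in>J. lc_coeff (a (g j)) r \<noteq> 0}"
  define FI where "FI = {i\<in>I. lc_coeff (a i) r \<noteq> 0}"
  have b2: "bij_betw g FJ FI"
    using bij unfolding FJ_def FI_def bij_betw_def inj_on_def by (auto simp: image_iff)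
  have "lc_coeff (tot J (a \<circ> g)) r = (\<Sum>j\<in>FJ. lc_coeff (a (g j)) r)"
    using c_tot[OF fJ] by (simp add: FJ_def)
  also have "\<dots> = (\<Sum>i\<in>FI. lc_coeff (a i) r)" by (rule sum.reindex_bij_betw[OF b2])
  also have "\<dots> = lc_coeff (tot I a) r" using c_tot[OF fs] by (simp add: FI_def)
  finally show "lc_coeff (tot J (a \<circ> g)) r = lc_coeff (tot I a) r" .
qed

lemma tot_small: "fsum I a \<Longrightarrow> (\<And>i. i \<in> I \<Longrightarrow> small (a i) q) \<Longrightarrow> small (tot I a) q"
  unfolding small_def by (subst c_tot) auto

lemma fsum_Sigma_inner:
  assumes fs: "fsum (Sigma I K) a" and i: "i \<in> I"
  shows "fsum (K i) (\<lambda>k. a (i, k))"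
  unfolding fsum_def
proof
  fix q
  have "{k \<in> K i. \<not> small (a (i, k)) q} \<subseteq> snd ` {p \<in> Sigma I K. \<not> small (a p) q}"
    using i by (auto simp: image_iff)
  moreover have "finite {p \<in> Sigma I K. \<not> small (a p) q}" using fs by (simp add: fsum_def)
  ultimately show "finite {k \<in> K i. \<not> small (a (i, k)) q}" by (meson finite_imageI finite_subset)
qed

lemma fsum_Sigma_outer:
  assumes fs: "fsum (Sigma I K) a"
  shows "fsum I (\<lambda>i. tot (K i) (\<lambda>k. a (i, k)))"
  unfolding fsum_def
proof
  fix q
  have "{i \<in> I. \<not> small (tot (K i) (\<lambda>k. a (i, k))) q} \<subseteq> fst ` {p \<in> Sigma I K. \<not> small (a p) q}"
  proof
    fix i assume "i \<in> {i \<in> I. \<not> small (tot (K i) (\<lambda>k. a (i, k))) q}"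
    then have i: "i \<in> I" "\<not> small (tot (K i) (\<lambda>k. a (i, k))) q" by auto
    have "\<exists>k\<in>K i. \<not> small (a (i, k)) q"
      using i tot_small[OF fsum_Sigma_inner[OF fs i(1)]] by blast
    then show "i \<in> fst ` {p \<in> Sigma I K. \<not> small (a p) q}" using i by (force simp: image_iff)
  qed
  moreover have "finite {p \<in> Sigma I K. \<not> small (a p) q}" using fs by (simp add: fsum_def)
  ultimately show "finite {i \<in> I. \<not> small (tot (K i) (\<lambda>k. a (i, k))) q}" by (meson finite_imageI finite_subset)
qed

lemma tot_Sigma:
  assumes fs: "fsum (Sigma I K) a"
  shows "tot (Sigma I K) a = tot I (\<lambda>i. tot (K i) (\<lambda>k. a (i, k)))"
proof (rule lc_ext)
  fix r
  define P where "P = {p \<in> Sigma I K. lc_coeff (a p) r \<noteq> 0}"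
  define G where "G = fst ` P"
  have finP: "finite P" using fsum_fin_r[OF fs] by (simp add: P_def)
  have finG: "finite G" "G \<subseteq> I" using finP by (auto simp: G_def P_def)
  have inner: "lc_coeff (tot (K i) (\<lambda>k. a (i, k))) r = (\<Sum>k\<in>{k\<in>K i. lc_coeff (a (i, k)) r \<noteq> 0}. lc_coeff (a (i, k)) r)"
    if "i \<in> I" for i using c_tot[OF fsum_Sigma_inner[OF fs that]] by simp
  have "lc_coeff (tot I (\<lambda>i. tot (K i) (\<lambda>k. a (i, k)))) r
      = (\<Sum>i\<in>G. lc_coeff (tot (K i) (\<lambda>k. a (i, k))) r)"
  proof (rule c_tot_gen[OF fsum_Sigma_outer[OF fs] finG])
    fix i assume "i \<in> I - G"
    then have "{k\<in>K i. lc_coeff (a (i, k)) r \<noteq> 0} = {}" by (force simp: G_def P_def image_iff)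
    then show "lc_coeff (tot (K i) (\<lambda>k. a (i, k))) r = 0" using inner \<open>i \<in> I - G\<close> by simp
  qed
  also have "\<dots> = (\<Sum>i\<in>G. \<Sum>k\<in>{k\<in>K i. lc_coeff (a (i, k)) r \<noteq> 0}. lc_coeff (a (i, k)) r)"
    using finG inner by (intro sum.cong) auto
  also have "\<dots> = (\<Sum>p\<in>Sigma G (\<lambda>i. {k\<in>K i. lc_coeff (a (i, k)) r \<noteq> 0}). lc_coeff (a p) r)"
  proof (subst sum.Sigma)
    show "finite G" by fact
    show "\<forall>i\<in>G. finite {k \<in> K i. lc_coeff (a (i, k)) r \<noteq> 0}"
      using finG fsum_fin_r[OF fsum_Sigma_inner[OF fs]] by auto
  qed (simp add: case_prod_beta)
  also have "Sigma G (\<lambda>i. {k\<in>K i. lc_coeff (a (i, k)) r \<noteq> 0}) = P"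
    by (force simp: G_def P_def image_iff)
  also have "(\<Sum>p\<in>P. lc_coeff (a p) r) = lc_coeff (tot (Sigma I K) a) r"
    using c_tot[OF fs] by (simp add: P_def)
  finally show "lc_coeff (tot (Sigma I K) a) r = lc_coeff (tot I (\<lambda>i. tot (K i) (\<lambda>k. a (i, k)))) r" by simp
qed

section \<open>Series\<close>

lemma c_psum: "lc_coeff (lc_psum f n) r = (\<Sum>k<n. lc_coeff (f k) r)"
  by (induction n) auto

lemma psum_eq: "lc_psum f n = sum f {..<n}"
  by (rule lc_ext) (simp add: c_psum c_sum)

lemma sums_tot: "fsum UNIV f \<Longrightarrow> lc_sums f (tot UNIV f)"
  unfolding lc_sums_def lim_iff
proof
  fix q assume fs: "fsum UNIV f"
  have "finite {k. \<not> small (f k) q}" using fs by (simp add: fsum_def)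
  then obtain N where N: "\<forall>k\<in>{k. \<not> small (f k) q}. k < N" by (meson finite_nat_bounded lessThan_iff subsetD)
  show "\<exists>N. \<forall>n\<ge>N. small (lc_psum f n - tot UNIV f) q"
  proof (intro exI allI impI)
    fix n assume "N \<le> n"
    show "small (lc_psum f n - tot UNIV f) q" unfolding small_def
    proof (intro allI impI)
      fix r assume "r < q"
      have "lc_coeff (tot UNIV f) r = lc_coeff (sum f {..<n}) r"
        by (rule c_tot_trunc[OF fs]) (use N \<open>N \<le> n\<close> \<open>r < q\<close> in auto)
      then show "lc_coeff (lc_psum f n - tot UNIV f) r = 0" by (simp add: psum_eq)
    qed
  qed
qed

lemma sums_fsum: "lc_sums f s \<Longrightarrow> fsum UNIV f"
  unfolding fsum_def
proof
  fix q assume "lc_sums f s"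
  then obtain N where N: "\<forall>n\<ge>N. small (lc_psum f n - s) q" unfolding lc_sums_def lim_iff by blast
  have "{k. \<not> small (f k) q} \<subseteq> {..<N}"
  proof
    fix k assume k: "k \<in> {k. \<not> small (f k) q}"
    show "k \<in> {..<N}"
    proof (rule ccontr)
      assume "k \<notin> {..<N}"
      then have "N \<le> k" "N \<le> Suc k" by auto
      then have "small (lc_psum f (Suc k) - s) q" "small (lc_psum f k - s) q" using N by blast+
      from small_diff[OF this] have "small (f k) q" by (simp add: psum_eq)
      with k show False by simp
    qed
  qed
  then show "finite {i \<in> UNIV. \<not> small (f i) q}" by (simp add: finite_subset)
qed

lemma summable_iff: "lc_summable f \<longleftrightarrow> fsum UNIV f"
  unfolding lc_summable_def using sums_tot sums_fsum by blast

lemma suminf_tot: "fsum UNIV f \<Longrightarrow> lc_suminf f = tot UNIV f"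
  unfolding lc_suminf_def
  by (rule the_equality) (auto simp: lc_sums_def intro: lim_unique sums_tot[unfolded lc_sums_def])

lemma lim0_fsum: "lc_lim f lc_zero \<Longrightarrow> fsum UNIV f"
  unfolding lim_iff fsum_def zero_lc_def[symmetric]
proof
  fix q assume "\<forall>q. \<exists>N. \<forall>n\<ge>N. small (f n - 0) q"
  then obtain N where "\<forall>n\<ge>N. small (f n) q" by auto
  then have "{i. \<not> small (f i) q} \<subseteq> {..<N}" by (auto, meson not_le)
  then show "finite {i \<in> UNIV. \<not> small (f i) q}" by (simp add: finite_subset)
qed

lemma small_below: "0 < e \<Longrightarrow> lc_coeff e q0 > 0 \<Longrightarrow> (\<forall>r<q0. lc_coeff e r = 0) \<Longrightarrow> small z (q0 + 1) \<Longrightarrow> z < e"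
  unfolding less_lex by (intro exI[of _ q0]) (auto simp: small_def)

lemma shift_sum:
  assumes "0 < e"
  shows "fsum UNIV (\<lambda>k::nat. sh (of_nat k + 1) e)"
    "tot UNIV (\<lambda>k::nat. sh (of_nat k + 1) e) + tot UNIV (\<lambda>k::nat. sh (of_nat k + 1) e) < e"
    "\<And>k. 0 < sh (of_nat k + 1) e"
proof -
  obtain q0 where q0: "0 < lc_coeff e q0" "\<forall>r<q0. lc_coeff e r = 0" using assms by (auto simp: pos_lex)
  have sm: "small (sh s e) q" if "q - s \<le> q0" for s q
    unfolding small_def using q0 that by (auto simp: c_sh)
  show fs: "fsum UNIV (\<lambda>k::nat. sh (of_nat k + 1) e)" unfolding fsum_def
  proof
    fix q
    obtain n :: nat where n: "q - q0 \<le> of_nat n" by (meson real_arch_simple)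
    have "{k::nat. \<not> small (sh (of_nat k + 1) e) q} \<subseteq> {..<n}"
    proof
      fix k assume "k \<in> {k::nat. \<not> small (sh (of_nat k + 1) e) q}"
      then have "\<not> q - (of_nat k + 1) \<le> q0" using sm by blast
      then have "of_nat k < (of_nat n :: rat)" using n by linarith
      then show "k \<in> {..<n}" by simp
    qed
    then show "finite {i \<in> UNIV. \<not> small (sh (of_nat i + 1) e) q}" by (simp add: finite_subset)
  qed
  have st: "small (tot UNIV (\<lambda>k::nat. sh (of_nat k + 1) e)) (q0 + 1)"
  proof (rule tot_small[OF fs])
    fix i :: nat show "small (sh (of_nat i + 1) e) (q0 + 1)" by (rule sm) simp
  qed
  have "small (tot UNIV (\<lambda>k::nat. sh (of_nat k + 1) e) + tot UNIV (\<lambda>k::nat. sh (of_nat k + 1) e)) (q0 + 1)"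
    by (rule small_add[OF st st])
  then show "tot UNIV (\<lambda>k::nat. sh (of_nat k + 1) e) + tot UNIV (\<lambda>k::nat. sh (of_nat k + 1) e) < e"
    using small_below[OF assms q0] by blast
  show "\<And>k. 0 < sh (of_nat k + 1) e" using sh_pos[OF assms] by blast
qed


lemma le_lc: "lc_le x y \<longleftrightarrow> x \<le> y" by (simp add: less_eq_lc_def)
lemma less_lc: "lc_less x y \<longleftrightarrow> x < y" by (simp add: less_lc_def)
lemma sub_lc: "lc_sub x y = x - y" by (simp add: minus_lc_def)

definition cl :: "lc \<Rightarrow> lc \<Rightarrow> lc set" where "cl a b = {x. a \<le> x \<and> x \<le> b}"
definition op :: "lc \<Rightarrow> lc \<Rightarrow> lc set" where "op a b = {x. a < x \<and> x < b}"

lemma interval_ab_props: "lc_interval_ab a b S \<Longrightarrow> a < b \<and> op a b \<subseteq> S \<and> S \<subseteq> cl a b"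
  unfolding lc_interval_ab_def le_lc less_lc cl_def op_def by auto

lemma endpoints_unique:
  assumes "a < b" "op a b \<subseteq> S" "S \<subseteq> cl a b" "a' < b'" "op a' b' \<subseteq> S" "S \<subseteq> cl a' b'"
  shows "a = a' \<and> b = b'"
proof -
  have A: "\<not> a < a'" if "a < b" "op a b \<subseteq> S" "S \<subseteq> cl a' b'" for a b a' b' S
  proof
    assume "a < a'"
    then have "a < min a' b" using that by simp
    then obtain z where z: "a < z" "z < min a' b" using dense_lc by blast
    then have "z \<in> S" using that by (auto simp: op_def)
    then have "a' \<le> z" using that by (auto simp: cl_def)
    with z show False using leD by auto
  qed
  have B: "\<not> b < b'" if "a' < b'" "op a' b' \<subseteq> S" "S \<subseteq> cl a b" for a b a' b' S
  proof
    assume "b < b'"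
    then have "max a' b < b'" using that by simp
    then obtain z where z: "max a' b < z" "z < b'" using dense_lc by blast
    then have "z \<in> S" using that by (auto simp: op_def)
    then have "z \<le> b" using that by (auto simp: cl_def)
    with z show False using leD by auto
  qed
  have "\<not> a < a'" "\<not> a' < a" "\<not> b < b'" "\<not> b' < b"
    using A[of a b S a' b'] A[of a' b' S a b] B[of a' b' S a b] B[of a b S a' b'] assms by auto
  then show ?thesis by auto
qed

lemma len_interval: "lc_interval_ab a b S \<Longrightarrow> lc_len S = b - a"
  unfolding lc_len_def
proof (rule the_equality)
  assume "lc_interval_ab a b S"
  then show "\<exists>a' b'. lc_interval_ab a' b' S \<and> b - a = lc_sub b' a'" by (auto simp: sub_lc)
next
  fix l assume "lc_interval_ab a b S" "\<exists>a' b'. lc_interval_ab a' b' S \<and> l = lc_sub b' a'"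
  then obtain a' b' where "lc_interval_ab a' b' S" "l = b' - a'" by (auto simp: sub_lc)
  moreover note interval_ab_props[OF \<open>lc_interval_ab a b S\<close>] interval_ab_props[OF \<open>lc_interval_ab a' b' S\<close>]
  ultimately show "l = b - a"
    using endpoints_unique[of a b S a' b'] by auto
qed

lemma interval_props:
  "lc_interval S \<Longrightarrow> \<exists>a b. a < b \<and> op a b \<subseteq> S \<and> S \<subseteq> cl a b \<and> lc_len S = b - a"
proof -
  assume "lc_interval S"
  then obtain a b where "lc_interval_ab a b S" unfolding lc_interval_def by blast
  then show ?thesis using interval_ab_props len_interval by blast
qed

lemma closed_interval: "a < b \<Longrightarrow> lc_interval (cl a b) \<and> lc_len (cl a b) = b - a"
proof -
  assume "a < b"
  then have "lc_interval_ab a b (cl a b)" unfolding lc_interval_ab_def cl_def le_lc less_lc by auto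
  then show ?thesis using len_interval lc_interval_def by blast
qed

lemma len_pos: "lc_interval S \<Longrightarrow> 0 < lc_len S"
  using interval_props by fastforce

lemma cover_fsum: "lc_cover A S \<Longrightarrow> fsum UNIV (\<lambda>n. lc_len (S n))"
  unfolding lc_cover_def summable_iff by blast

lemma cover_sum: "lc_cover A S \<Longrightarrow> lc_suminf (\<lambda>n. lc_len (S n)) = tot UNIV (\<lambda>n. lc_len (S n))"
  using cover_fsum suminf_tot by blast

lemma cover_sum_nonneg: "lc_cover A S \<Longrightarrow> 0 \<le> tot UNIV (\<lambda>n. lc_len (S n))"
proof -
  assume a: "lc_cover A S"
  show ?thesis
    by (rule tot_nonneg[OF cover_fsum[OF a]]) (use a len_pos less_imp_le in \<open>auto simp: lc_cover_def\<close>)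
qed

lemma is_inf_iff: "lc_is_inf X m \<longleftrightarrow> (\<forall>x\<in>X. m \<le> x) \<and> (\<forall>m'. (\<forall>x\<in>X. m' \<le> x) \<longrightarrow> m' \<le> m)"
  by (simp add: lc_is_inf_def le_lc)

lemma is_inf_unique: "lc_is_inf X m \<Longrightarrow> lc_is_inf X m' \<Longrightarrow> m = m'"
proof -
  assume a: "lc_is_inf X m" "lc_is_inf X m'"
  have "\<forall>x\<in>X. m \<le> x" "\<forall>x\<in>X. m' \<le> x" using a unfolding is_inf_iff by blast+
  moreover have "\<forall>m''. (\<forall>x\<in>X. m'' \<le> x) \<longrightarrow> m'' \<le> m" "\<forall>m''. (\<forall>x\<in>X. m'' \<le> x) \<longrightarrow> m'' \<le> m'"
    using a unfolding is_inf_iff by blast+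
  ultimately have "m' \<le> m" "m \<le> m'" by blast+
  then show ?thesis by simp
qed

lemma Mu_inf: "lc_outer_measurable A \<Longrightarrow> lc_is_inf (lc_cover_sums A) (lc_Mu A)"
proof -
  assume "lc_outer_measurable A"
  then obtain m where m: "lc_is_inf (lc_cover_sums A) m" unfolding lc_outer_measurable_def by blast
  have "lc_Mu A = m" unfolding lc_Mu_def by (rule the_equality) (use m is_inf_unique in blast)+
  with m show ?thesis by simp
qed

lemma Mu_eq: "lc_is_inf (lc_cover_sums A) m \<Longrightarrow> lc_Mu A = m"
  unfolding lc_Mu_def by (rule the_equality) (auto intro: is_inf_unique)

lemma cover_sums_iff: "x \<in> lc_cover_sums A \<longleftrightarrow> (\<exists>S. lc_cover A S \<and> x = tot UNIV (\<lambda>n. lc_len (S n)))"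
proof
  assume "x \<in> lc_cover_sums A"
  then obtain S where "lc_cover A S" "x = lc_suminf (\<lambda>n. lc_len (S n))" unfolding lc_cover_sums_def by blast
  moreover from cover_sum[OF this(1)] have "lc_suminf (\<lambda>n. lc_len (S n)) = tot UNIV (\<lambda>n. lc_len (S n))" .
  ultimately show "\<exists>S. lc_cover A S \<and> x = tot UNIV (\<lambda>n. lc_len (S n))" by auto
next
  assume "\<exists>S. lc_cover A S \<and> x = tot UNIV (\<lambda>n. lc_len (S n))"
  then obtain S where "lc_cover A S" "x = tot UNIV (\<lambda>n. lc_len (S n))" by blast
  moreover from cover_sum[OF this(1)] have "lc_suminf (\<lambda>n. lc_len (S n)) = tot UNIV (\<lambda>n. lc_len (S n))" .
  ultimately show "x \<in> lc_cover_sums A" unfolding lc_cover_sums_def by auto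
qed

lemma Mu_le: "lc_outer_measurable A \<Longrightarrow> lc_cover A S \<Longrightarrow> lc_Mu A \<le> tot UNIV (\<lambda>n. lc_len (S n))"
proof -
  assume a: "lc_outer_measurable A" "lc_cover A S"
  have "\<forall>x\<in>lc_cover_sums A. lc_Mu A \<le> x" using Mu_inf[OF a(1)] unfolding is_inf_iff by blast
  moreover have "tot UNIV (\<lambda>n. lc_len (S n)) \<in> lc_cover_sums A" using a(2) cover_sums_iff by blast
  ultimately show ?thesis by blast
qed

lemma Mu_approx:
  assumes "lc_outer_measurable A" "0 < e"
  shows "\<exists>S. lc_cover A S \<and> tot UNIV (\<lambda>n. lc_len (S n)) < lc_Mu A + e"
proof (rule ccontr)
  assume "\<not> ?thesis"
  then have "\<forall>x\<in>lc_cover_sums A. lc_Mu A + e \<le> x" using cover_sums_iff by (auto simp: not_less)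
  then have "lc_Mu A + e \<le> lc_Mu A" using Mu_inf[OF assms(1)] unfolding is_inf_iff by blast
  with assms show False by simp
qed

lemma Mu_nonneg: "lc_outer_measurable A \<Longrightarrow> 0 \<le> lc_Mu A"
proof -
  assume a: "lc_outer_measurable A"
  have "\<forall>x\<in>lc_cover_sums A. 0 \<le> x"
  proof
    fix x assume "x \<in> lc_cover_sums A"
    then obtain S where "lc_cover A S" "x = tot UNIV (\<lambda>n. lc_len (S n))" using cover_sums_iff by blast
    then show "0 \<le> x" using cover_sum_nonneg by simp
  qed
  then show ?thesis using Mu_inf[OF a] unfolding is_inf_iff by blast
qed

section \<open>Existence of infima by approximation\<close>

lemma inf_exists:
  assumes ap: "\<And>e. 0 < e \<Longrightarrow> \<exists>x\<in>X. \<exists>l. (\<forall>y\<in>X. l \<le> y) \<and> x - l < e"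
  shows "\<exists>m. lc_is_inf X m"
proof -
  have "\<forall>j::nat. \<exists>x l. x \<in> X \<and> (\<forall>y\<in>X. l \<le> y) \<and> x - l < ind (of_nat j)"
    using ap ind_pos by blast
  then have "\<forall>j::nat. \<exists>p. fst p \<in> X \<and> (\<forall>y\<in>X. snd p \<le> y) \<and> fst p - snd p < ind (of_nat j)"
    by simp
  from choice[OF this] obtain p where p: "\<forall>j::nat. fst (p j) \<in> X \<and> (\<forall>y\<in>X. snd (p j) \<le> y) \<and> fst (p j) - snd (p j) < ind (of_nat j)"
    by blast
  define xs where "xs j = fst (p j)" for j
  define ls where "ls j = snd (p j)" for j
  have xl: "\<And>j. xs j \<in> X" "\<And>j. \<forall>y\<in>X. ls j \<le> y" "\<And>j. xs j - ls j < ind (of_nat j)"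
    using p by (auto simp: xs_def ls_def)
  have indle: "ind (of_nat i) \<le> ind (of_nat j)" if "j \<le> i" for i j :: nat
    using ind_anti[of "of_nat j" "of_nat i"] that by (cases "i = j") auto
  have cauchy: "small (xs i - xs j) (of_nat j)" if "j \<le> i" for i j
  proof (rule small_of_bounds)
    have "ls i \<le> xs j" "ls j \<le> xs i" using xl by auto
    have "xs i - xs j \<le> xs i - ls i" using \<open>ls i \<le> xs j\<close> by simp
    also have "\<dots> < ind (of_nat i)" using xl by auto
    also have "\<dots> \<le> ind (of_nat j)" using indle that by auto
    finally show "xs i - xs j < ind (of_nat j)" .
    have "- ind (of_nat j) < ls j - xs j" using xl(3)[of j] by (simp add: algebra_simps)
    also have "\<dots> \<le> xs i - xs j" using \<open>ls j \<le> xs i\<close> by simp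
    finally show "- ind (of_nat j) < xs i - xs j" .
  qed
  define N :: "rat \<Rightarrow> nat" where "N r = nat \<lceil>r\<rceil> + 1" for r
  have N1: "r < of_nat (N r)" for r
  proof -
    have "r \<le> of_int \<lceil>r\<rceil>" by simp
    also have "\<dots> \<le> of_nat (nat \<lceil>r\<rceil>)" by simp
    finally show ?thesis unfolding N_def by simp
  qed
  have N2: "r \<le> q \<Longrightarrow> N r \<le> N q" for r q unfolding N_def by (simp add: ceiling_mono nat_mono)
  define Lf where "Lf r = lc_coeff (xs (N r)) r" for r
  have K: "lc_coeff (xs n) r = Lf r" if "r < q" "N q \<le> n" for r q n
  proof -
    have "N r \<le> n" using N2[of r q] that by simp
    then have "small (xs n - xs (N r)) (of_nat (N r))" by (rule cauchy)
    then show ?thesis unfolding Lf_def using N1[of r] by (rule small_diff_eq)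
  qed
  have lfL: "lf Lf" unfolding lf_def
  proof
    fix q
    have "{r. r < q \<and> Lf r \<noteq> 0} \<subseteq> {r. r < q \<and> lc_coeff (xs (N q)) r \<noteq> 0}"
      using K by auto
    moreover have "finite {r. r < q \<and> lc_coeff (xs (N q)) r \<noteq> 0}" using lf_coeff by (simp add: lf_def)
    ultimately show "finite {r. r < q \<and> Lf r \<noteq> 0}" by (rule finite_subset)
  qed
  define L where "L = Abs_lc Lf"
  have cL: "lc_coeff L = Lf" unfolding L_def using lfL by (rule coeff_Abs)
  have conv: "\<forall>n\<ge>N q. small (xs n - L) q" for q
    unfolding small_def using K cL by simp
  have lim: "lc_lim xs L" unfolding lim_iff using conv by blast
  have lb: "\<forall>x\<in>X. L \<le> x"
  proof (rule ccontr)
    assume "\<not> (\<forall>x\<in>X. L \<le> x)"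
    then obtain x where x: "x \<in> X" "x < L" by (auto simp: not_le)
    define d where "d = hf (L - x)"
    have d: "0 < d" "d + d = L - x" using x hf_pos hf_hf by (auto simp: d_def)
    from small_lt[OF d(1)] obtain q where q: "\<forall>z. small z q \<longrightarrow> z < d \<and> - d < z" by blast
    define j where "j = max (N q) (nat \<lceil>q\<rceil>)"
    have "q \<le> of_nat (nat \<lceil>q\<rceil>)" by (rule of_nat_ceiling)
    also have "\<dots> \<le> of_nat j" unfolding j_def by simp
    finally have "q \<le> of_nat j" .
    then have "small (ind (of_nat j)) q" by (auto simp: small_def c_ind)
    then have i1: "ind (of_nat j) < d" using q by blast
    have "small (xs j - L) q" using conv j_def by simp
    then have i2: "- d < xs j - L" using q by blast
    have "ls j \<le> x" using xl x by blast
    moreover have "xs j - ind (of_nat j) < ls j" using xl(3)[of j] by (simp add: algebra_simps)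
    ultimately have "xs j - ind (of_nat j) < x" by simp
    moreover have "L - d - d < xs j - ind (of_nat j)"
    proof -
      have h1: "L - d < xs j" using i2 by (simp add: algebra_simps)
      have h2: "- d < - ind (of_nat j)" using i1 by simp
      from add_strict_mono[OF h1 h2] show ?thesis by (simp add: algebra_simps)
    qed
    ultimately have "L - d - d < x" by (rule less_trans[rotated])
    then have "L - (d + d) < x" by (simp add: algebra_simps)
    with d show False by simp
  qed
  have glb: "\<forall>m'. (\<forall>x\<in>X. m' \<le> x) \<longrightarrow> m' \<le> L"
    using lim_ge[OF lim] xl(1) by blast
  show ?thesis using lb glb unfolding is_inf_iff by blast
qed


definition ilen :: "lc \<Rightarrow> lc \<Rightarrow> lc" where "ilen a b = max 0 (b - a)"

lemma ilen_nonneg: "0 \<le> ilen a b" by (simp add: ilen_def)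

lemma ilen_eq: "a \<le> b \<Longrightarrow> ilen a b = b - a" by (simp add: ilen_def)

lemma three_piece_gen: fixes a b c e :: "'a::linordered_ab_group_add"
  assumes "c \<le> e" shows "max 0 (b - a) = max 0 (min b c - a) + max 0 (min b e - max a c) + max 0 (b - max a e)"
  using assms by (auto simp: max_def min_def algebra_simps; metis add.commute add_mono less_imp_le not_le)

lemma three_piece: "c \<le> e \<Longrightarrow> ilen a b = ilen a (min b c) + ilen (max a c) (min b e) + ilen (max a e) b"
  unfolding ilen_def by (rule three_piece_gen)

lemma ilen_sub: "ilen (max a c) (min b e) \<le> ilen a b"
  unfolding ilen_def by (auto simp: max_def min_def algebra_simps; metis add.commute add_mono less_imp_le not_le add_strict_mono)

lemma ilen_left: "ilen a (min b c) \<le> ilen a b"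
  unfolding ilen_def by (auto simp: max_def min_def algebra_simps; metis add.commute add_mono less_imp_le not_le add_strict_mono)

lemma ilen_right: "ilen (max a e) b \<le> ilen a b"
  unfolding ilen_def by (auto simp: max_def min_def algebra_simps; metis add.commute add_mono less_imp_le not_le add_strict_mono)

lemma ilen_split_sep:
  assumes "cn \<le> en" "cj \<le> ej" "en \<le> cj \<or> ej \<le> cn"
  shows "ilen (max a cn) (min b en) \<le> ilen (max a cn) (min (min b cj) en) + ilen (max (max a ej) cn) (min b en)"
  using assms unfolding ilen_def by (auto simp: max_def min_def algebra_simps; metis add.commute add_mono less_imp_le not_le add_strict_mono)

lemma fsum_dom: "fsum I b \<Longrightarrow> (\<And>i. i \<in> I \<Longrightarrow> 0 \<le> a i) \<Longrightarrow> (\<And>i. i \<in> I \<Longrightarrow> a i \<le> b i) \<Longrightarrow> fsum I a"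
  unfolding fsum_def
proof
  fix q assume a: "\<forall>q. finite {i \<in> I. \<not> small (b i) q}" "\<And>i. i \<in> I \<Longrightarrow> 0 \<le> a i" "\<And>i. i \<in> I \<Longrightarrow> a i \<le> b i"
  have "{i \<in> I. \<not> small (a i) q} \<subseteq> {i \<in> I. \<not> small (b i) q}" using a(2,3) small_mono by blast
  then show "finite {i \<in> I. \<not> small (a i) q}" using a(1) finite_subset by blast
qed

lemma le_of_pos: "(\<And>e. 0 < e \<Longrightarrow> x < y + e) \<Longrightarrow> (x::lc) \<le> y"
proof (rule ccontr)
  assume a: "\<And>e. 0 < e \<Longrightarrow> x < y + e" "\<not> x \<le> y"
  then have "0 < x - y" by simp
  from a(1)[OF this] show False by simp
qed

lemma endpoints_choice:
  assumes "\<And>i. lc_interval (S i)"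
  shows "\<exists>sa sb. \<forall>i. sa i < sb i \<and> op (sa i) (sb i) \<subseteq> S i \<and> S i \<subseteq> cl (sa i) (sb i) \<and> lc_len (S i) = sb i - sa i"
proof -
  have "\<forall>i. \<exists>p. fst p < snd p \<and> op (fst p) (snd p) \<subseteq> S i \<and> S i \<subseteq> cl (fst p) (snd p) \<and> lc_len (S i) = snd p - fst p"
    using interval_props[OF assms] by fastforce
  from choice[OF this] obtain p where "\<forall>i. fst (p i) < snd (p i) \<and> op (fst (p i)) (snd (p i)) \<subseteq> S i \<and> S i \<subseteq> cl (fst (p i)) (snd (p i)) \<and> lc_len (S i) = snd (p i) - fst (p i)"
    by blast
  then show ?thesis by (intro exI[of _ "\<lambda>i. fst (p i)"] exI[of _ "\<lambda>i. snd (p i)"]) blast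
qed

lemma fatten:
  fixes a b :: "'i \<Rightarrow> lc"
  assumes cnt: "countable I" "infinite I" and cov: "X \<subseteq> (\<Union>i\<in>I. cl (a i) (b i))"
    and fs: "fsum I (\<lambda>i. ilen (a i) (b i))" and e: "0 < e"
  shows "\<exists>S. lc_cover X S \<and> tot UNIV (\<lambda>n. lc_len (S n)) < tot I (\<lambda>i. ilen (a i) (b i)) + e"
proof -
  define g where "g = from_nat_into I"
  have bij: "bij_betw g UNIV I" unfolding g_def using bij_betw_from_nat_into[OF cnt] .
  define d where "d k = sh (of_nat k + 1) e" for k :: nat
  note sd = shift_sum[OF e, folded d_def]
  define S where "S k = cl (a (g k) - d k) (max (a (g k)) (b (g k)) + d k)" for k
  have lt: "a (g k) - d k < max (a (g k)) (b (g k)) + d k" for k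
  proof -
    have "a (g k) - d k < a (g k)" using sd(3)[of k] by simp
    also have "\<dots> \<le> max (a (g k)) (b (g k))" by simp
    also have "\<dots> < max (a (g k)) (b (g k)) + d k" using sd(3)[of k] by simp
    finally show ?thesis .
  qed
  have len: "lc_len (S k) = ilen (a (g k)) (b (g k)) + d k + d k" for k
    using closed_interval[OF lt[of k]] unfolding S_def ilen_def
    by (auto simp: max_def algebra_simps)
  have fi: "fsum UNIV (\<lambda>k. ilen (a (g k)) (b (g k)))"
    using fsum_reindex[OF bij fs] by (simp add: comp_def)
  have ti: "tot UNIV (\<lambda>k. ilen (a (g k)) (b (g k))) = tot I (\<lambda>i. ilen (a i) (b i))"
    using tot_reindex[OF bij fs] by (simp add: comp_def)
  have fl: "fsum UNIV (\<lambda>k. lc_len (S k))"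
    unfolding len by (intro fsum_add fi sd(1))
  have tl: "tot UNIV (\<lambda>k. lc_len (S k)) = tot I (\<lambda>i. ilen (a i) (b i)) + (tot UNIV d + tot UNIV d)"
    unfolding len by (simp add: tot_add fsum_add fi sd(1) ti algebra_simps)
  have cover: "lc_cover X S" unfolding lc_cover_def summable_iff
  proof (intro conjI allI)
    show "lc_interval (S n)" for n using closed_interval[OF lt[of n]] by (simp add: S_def)
    show "fsum UNIV (\<lambda>n. lc_len (S n))" by (rule fl)
    show "X \<subseteq> (\<Union>n. S n)"
    proof
      fix x assume "x \<in> X"
      then obtain i where i: "i \<in> I" "x \<in> cl (a i) (b i)" using cov by blast
      then obtain k where k: "g k = i" using bij by (metis bij_betw_def imageE UNIV_I)
      have "x \<in> S k" using i k sd(3)[of k] unfolding S_def cl_def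
        by (auto simp: le_max_iff_disj intro: add_increasing2 less_imp_le order_trans[of _ "a i"])
      then show "x \<in> (\<Union>n. S n)" by blast
    qed
  qed
  show ?thesis using cover tl sd(2) by (intro exI[of _ S]) simp
qed

lemma fatten_le:
  fixes a b :: "'i \<Rightarrow> lc"
  assumes "lc_outer_measurable X" "countable I" "infinite I" "X \<subseteq> (\<Union>i\<in>I. cl (a i) (b i))"
    and "fsum I (\<lambda>i. ilen (a i) (b i))"
  shows "lc_Mu X \<le> tot I (\<lambda>i. ilen (a i) (b i))"
proof (rule le_of_pos)
  fix e :: lc assume "0 < e"
  from fatten[OF assms(2-5) this] obtain S where "lc_cover X S" "tot UNIV (\<lambda>n. lc_len (S n)) < tot I (\<lambda>i. ilen (a i) (b i)) + e"
    by blast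
  with Mu_le[OF assms(1)] show "lc_Mu X < tot I (\<lambda>i. ilen (a i) (b i)) + e" by (meson le_less_trans)
qed

lemma rows:
  fixes a :: "nat \<times> nat \<Rightarrow> lc"
  assumes "finite F" "\<And>j. j \<in> F \<Longrightarrow> fsum UNIV (\<lambda>k. a (j, k))" "\<And>j k. j \<notin> F \<Longrightarrow> a (j, k) = 0"
  shows "fsum UNIV a" "tot UNIV a = (\<Sum>j\<in>F. tot UNIV (\<lambda>k. a (j, k)))"
proof -
  show fs: "fsum UNIV a" unfolding fsum_def
  proof
    fix q
    have "{p. \<not> small (a p) q} \<subseteq> (\<Union>j\<in>F. {j} \<times> {k. \<not> small (a (j, k)) q})"
      using assms(3) by (auto, metis small_zero)
    moreover have "finite (\<Union>j\<in>F. {j} \<times> {k. \<not> small (a (j, k)) q})"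
      using assms(1,2) by (auto simp: fsum_def)
    ultimately show "finite {p \<in> UNIV. \<not> small (a p) q}" by (simp add: finite_subset)
  qed
  have "tot UNIV a = tot (Sigma UNIV (\<lambda>_. UNIV)) a" by simp
  also have "\<dots> = tot UNIV (\<lambda>j. tot UNIV (\<lambda>k. a (j, k)))" by (rule tot_Sigma) (use fs in simp)
  also have "\<dots> = (\<Sum>j\<in>F. tot UNIV (\<lambda>k. a (j, k)))"
    by (rule tot_support(2)) (use assms in \<open>auto simp: tot_zero\<close>)
  finally show "tot UNIV a = (\<Sum>j\<in>F. tot UNIV (\<lambda>k. a (j, k)))" .
qed

lemma countable_nn: "countable (UNIV :: (nat \<times> nat) set)" "infinite (UNIV :: (nat \<times> nat) set)"
  by (simp_all add: finite_prod)

lemma countable_n: "countable (UNIV :: nat set)" "infinite (UNIV :: nat set)"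
  by simp_all


lemma meas_int:
  assumes A: "lc_outer_measurable A" and ce: "c < e" "op c e \<subseteq> J" "J \<subseteq> cl c e"
  shows "lc_outer_measurable (A \<inter> J)"
proof -
  have "\<exists>m. lc_is_inf (lc_cover_sums (A \<inter> J)) m"
  proof (rule inf_exists)
    fix eps :: lc assume "0 < eps"
    define e1 where "e1 = hf eps"
    have e1: "0 < e1" "e1 + e1 = eps" using hf_pos hf_hf \<open>0 < eps\<close> by (auto simp: e1_def)
    obtain S where S: "lc_cover A S" "tot UNIV (\<lambda>n. lc_len (S n)) < lc_Mu A + e1"
      using Mu_approx[OF A e1(1)] by blast
    have Sint: "\<And>n. lc_interval (S n)" using S(1) by (simp add: lc_cover_def)
    obtain sa sb where sab: "\<forall>n. sa n < sb n \<and> op (sa n) (sb n) \<subseteq> S n \<and> S n \<subseteq> cl (sa n) (sb n) \<and> lc_len (S n) = sb n - sa n"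
      using endpoints_choice[of S] Sint by blast
    define mid where "mid n = ilen (max (sa n) c) (min (sb n) e)" for n
    define lr where "lr n = ilen (sa n) (min (sb n) c) + ilen (max (sa n) e) (sb n)" for n
    have lenS: "lc_len (S n) = ilen (sa n) (sb n)" for n using sab by (simp add: ilen_eq less_imp_le)
    have fS: "fsum UNIV (\<lambda>n. lc_len (S n))" by (rule cover_fsum[OF S(1)])
    have split: "lc_len (S n) = mid n + lr n" for n
      unfolding lenS mid_def lr_def using three_piece[of c e "sa n" "sb n"] ce(1) by (simp add: algebra_simps)
    have mid0: "0 \<le> mid n" for n by (simp add: mid_def ilen_nonneg)
    have lr0: "0 \<le> lr n" for n by (simp add: lr_def ilen_nonneg)
    have fmid: "fsum UNIV mid"
      by (rule fsum_dom[OF fS]) (use split mid0 lr0 in \<open>auto simp: add_increasing2\<close>)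
    have flr: "fsum UNIV lr"
      by (rule fsum_dom[OF fS]) (use split mid0 lr0 in \<open>auto simp: add_increasing\<close>)
    have PQ: "tot UNIV mid + tot UNIV lr = tot UNIV (\<lambda>n. lc_len (S n))"
      using tot_add[OF fmid flr] split by simp
    have covm: "A \<inter> J \<subseteq> (\<Union>n\<in>UNIV. cl (max (sa n) c) (min (sb n) e))"
    proof
      fix x assume x: "x \<in> A \<inter> J"
      then obtain n where "x \<in> S n" using S(1) by (auto simp: lc_cover_def)
      then have "x \<in> cl (sa n) (sb n)" using sab by blast
      moreover have "x \<in> cl c e" using x ce by auto
      ultimately show "x \<in> (\<Union>n\<in>UNIV. cl (max (sa n) c) (min (sb n) e))" by (auto simp: cl_def)
    qed
    have fmid': "fsum UNIV (\<lambda>n. ilen (max (sa n) c) (min (sb n) e))" using fmid by (simp add: mid_def[abs_def])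
    from fatten[OF countable_n covm fmid' e1(1)] obtain T where
      T: "lc_cover (A \<inter> J) T" "tot UNIV (\<lambda>n. lc_len (T n)) < tot UNIV mid + e1"
      by (auto simp: mid_def[abs_def])
    define x where "x = tot UNIV (\<lambda>n. lc_len (T n))"
    have xin: "x \<in> lc_cover_sums (A \<inter> J)" using T(1) cover_sums_iff x_def by blast
    define l where "l = lc_Mu A - tot UNIV lr"
    have lb: "\<forall>y\<in>lc_cover_sums (A \<inter> J). l \<le> y"
    proof
      fix y assume "y \<in> lc_cover_sums (A \<inter> J)"
      then obtain T' where T': "lc_cover (A \<inter> J) T'" "y = tot UNIV (\<lambda>n. lc_len (T' n))"
        using cover_sums_iff by blast
      have T'int: "\<And>n. lc_interval (T' n)" using T'(1) by (simp add: lc_cover_def)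
      obtain ta tb where tab: "\<forall>n. ta n < tb n \<and> op (ta n) (tb n) \<subseteq> T' n \<and> T' n \<subseteq> cl (ta n) (tb n) \<and> lc_len (T' n) = tb n - ta n"
        using endpoints_choice[of T'] T'int by blast
      have lenT: "lc_len (T' n) = ilen (ta n) (tb n)" for n using tab by (simp add: ilen_eq less_imp_le)
      define bl :: "nat \<times> nat \<Rightarrow> lc" where "bl = (\<lambda>(j, k). if j = 0 then ta k else if j = 1 then sa k else if j = 2 then max (sa k) e else 0)"
      define br :: "nat \<times> nat \<Rightarrow> lc" where "br = (\<lambda>(j, k). if j = 0 then tb k else if j = 1 then min (sb k) c else if j = 2 then sb k else 0)"
      have cov: "A \<subseteq> (\<Union>p\<in>UNIV. cl (bl p) (br p))"
      proof
        fix x assume x: "x \<in> A"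
        show "x \<in> (\<Union>p\<in>UNIV. cl (bl p) (br p))"
        proof (cases "x \<in> J")
          case True
          then obtain k where "x \<in> T' k" using x T'(1) by (auto simp: lc_cover_def)
          then have "x \<in> cl (bl (0, k)) (br (0, k))" using tab by (auto simp: bl_def br_def)
          then show ?thesis by blast
        next
          case False
          then have "x \<le> c \<or> e \<le> x" using ce(2) by (auto simp: op_def not_le)
          obtain n where "x \<in> S n" using x S(1) by (auto simp: lc_cover_def)
          then have xn: "x \<in> cl (sa n) (sb n)" using sab by blast
          show ?thesis
          proof (cases "x \<le> c")
            case True
            then have "x \<in> cl (bl (1, n)) (br (1, n))" using xn by (auto simp: bl_def br_def cl_def)
            then show ?thesis by blast
          next
            case False
            then have "e \<le> x" using \<open>x \<le> c \<or> e \<le> x\<close> by simp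
            then have "x \<in> cl (bl (2, n)) (br (2, n))" using xn by (auto simp: bl_def br_def cl_def)
            then show ?thesis by blast
          qed
        qed
      qed
      have r0: "(\<lambda>k. ilen (bl (0, k)) (br (0, k))) = (\<lambda>k. lc_len (T' k))" by (simp add: bl_def br_def lenT)
      have r1: "(\<lambda>k. ilen (bl (1, k)) (br (1, k))) = (\<lambda>k. ilen (sa k) (min (sb k) c))" by (simp add: bl_def br_def)
      have r2: "(\<lambda>k. ilen (bl (2, k)) (br (2, k))) = (\<lambda>k. ilen (max (sa k) e) (sb k))" by (simp add: bl_def br_def)
      have f1: "fsum UNIV (\<lambda>k. ilen (sa k) (min (sb k) c))"
        by (rule fsum_dom[OF fS]) (auto simp: lenS ilen_nonneg ilen_left)
      have f2: "fsum UNIV (\<lambda>k. ilen (max (sa k) e) (sb k))"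
        by (rule fsum_dom[OF fS]) (auto simp: lenS ilen_nonneg ilen_right)
      have rowsf: "\<And>j. j \<in> {0, 1, 2} \<Longrightarrow> fsum UNIV (\<lambda>k. ilen (bl (j, k)) (br (j, k)))"
        using r0 r1 r2 f1 f2 cover_fsum[OF T'(1)] by auto
      have rowsz: "\<And>j k. j \<notin> {0, 1, 2} \<Longrightarrow> ilen (bl (j, k)) (br (j, k)) = 0"
        by (simp add: bl_def br_def ilen_def)
      note R = rows[of "{0,1,2}" "\<lambda>p. ilen (bl p) (br p)", OF _ rowsf rowsz]
      have "lc_Mu A \<le> tot UNIV (\<lambda>p. ilen (bl p) (br p))"
        by (rule fatten_le[OF A countable_nn cov]) (use R in simp)
      also have "\<dots> = y + tot UNIV lr"
        using R(2) r0 r1 r2 T'(2) tot_add[OF f1 f2] by (simp add: lr_def[abs_def] algebra_simps)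
      finally show "l \<le> y" by (simp add: l_def algebra_simps)
    qed
    have "x - l < eps"
    proof -
      have "x - l = x + tot UNIV lr - lc_Mu A" by (simp add: l_def algebra_simps)
      also have "\<dots> < tot UNIV mid + e1 + tot UNIV lr - lc_Mu A" using T(2) x_def by simp
      also have "\<dots> = tot UNIV (\<lambda>n. lc_len (S n)) - lc_Mu A + e1" using PQ by (simp add: algebra_simps)
      also have "\<dots> < e1 + e1" using S(2) by (simp add: algebra_simps)
      finally show ?thesis using e1 by simp
    qed
    then show "\<exists>x\<in>lc_cover_sums (A \<inter> J). \<exists>l. (\<forall>y\<in>lc_cover_sums (A \<inter> J). l \<le> y) \<and> x - l < eps"
      using xin lb by blast
  qed
  then show ?thesis unfolding lc_outer_measurable_def .
qed


lemma FD:
  assumes "finite F" "\<forall>n\<in>F. ca n \<le> ce n" "\<forall>n\<in>F. \<forall>m\<in>F. n \<noteq> m \<longrightarrow> ce n \<le> ca m \<or> ce m \<le> ca n"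
  shows "(\<Sum>n\<in>F. ilen (max a (ca n)) (min b (ce n))) \<le> ilen a b"
  using assms
proof (induction F arbitrary: a b rule: finite_induct)
  case empty thus ?case by (simp add: ilen_nonneg)
next
  case (insert j F)
  have h1: "\<forall>n\<in>F. ca n \<le> ce n" "\<forall>n\<in>F. \<forall>m\<in>F. n \<noteq> m \<longrightarrow> ce n \<le> ca m \<or> ce m \<le> ca n"
    using insert.prems by auto
  have IH1: "(\<Sum>n\<in>F. ilen (max a (ca n)) (min (min b (ca j)) (ce n))) \<le> ilen a (min b (ca j))"
    using insert.IH[OF h1] by blast
  have IH2: "(\<Sum>n\<in>F. ilen (max (max a (ce j)) (ca n)) (min b (ce n))) \<le> ilen (max a (ce j)) b"
    using insert.IH[OF h1] by blast
  have each: "ilen (max a (ca n)) (min b (ce n)) \<le> ilen (max a (ca n)) (min (min b (ca j)) (ce n)) + ilen (max (max a (ce j)) (ca n)) (min b (ce n))"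
    if "n \<in> F" for n
  proof (rule ilen_split_sep)
    show "ca n \<le> ce n" "ca j \<le> ce j" using insert.prems that by auto
    have "n \<noteq> j" using that insert.hyps by auto
    then show "ce n \<le> ca j \<or> ce j \<le> ca n" using insert.prems that by auto
  qed
  have "(\<Sum>n\<in>insert j F. ilen (max a (ca n)) (min b (ce n)))
      = ilen (max a (ca j)) (min b (ce j)) + (\<Sum>n\<in>F. ilen (max a (ca n)) (min b (ce n)))"
    using insert.hyps by simp
  also have "\<dots> \<le> ilen (max a (ca j)) (min b (ce j)) + ((\<Sum>n\<in>F. ilen (max a (ca n)) (min (min b (ca j)) (ce n)))
       + (\<Sum>n\<in>F. ilen (max (max a (ce j)) (ca n)) (min b (ce n))))"
    using each by (simp add: sum.distrib[symmetric] sum_mono)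
  also have "\<dots> \<le> ilen (max a (ca j)) (min b (ce j)) + (ilen a (min b (ca j)) + ilen (max a (ce j)) b)"
    using IH1 IH2 by (simp add: add_mono)
  also have "\<dots> = ilen a b"
    using three_piece[of "ca j" "ce j" a b] insert.prems by (simp add: algebra_simps)
  finally show ?case .
qed

theorem mainTheorem5:
  fixes A :: "lc set" and J :: "nat \<Rightarrow> lc set"
  assumes "lc_outer_measurable A"
    and "\<forall>n. lc_interval (J n)"
    and "\<forall>m n. m \<noteq> n \<longrightarrow> J m \<inter> J n = {}"
    and "lc_lim (\<lambda>n. lc_len (J n)) lc_zero"
  shows "lc_outer_measurable (A \<inter> (\<Union>n. J n))
    \<and> lc_summable (\<lambda>n. lc_Mu (A \<inter> J n))
    \<and> lc_Mu (A \<inter> (\<Union>n. J n)) = lc_suminf (\<lambda>n. lc_Mu (A \<inter> J n))"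
proof -
  note A = assms(1)
  define B where "B = A \<inter> (\<Union>n. J n)"
  obtain ca ce where cab: "\<forall>n. ca n < ce n \<and> op (ca n) (ce n) \<subseteq> J n \<and> J n \<subseteq> cl (ca n) (ce n) \<and> lc_len (J n) = ce n - ca n"
    using endpoints_choice[of J] assms(2) by blast
  have lenJ: "lc_len (J n) = ilen (ca n) (ce n)" for n using cab by (simp add: ilen_eq less_imp_le)
  have fJ: "fsum UNIV (\<lambda>n. lc_len (J n))" by (rule lim0_fsum[OF assms(4)])
  have sep: "ce n \<le> ca m \<or> ce m \<le> ca n" if "n \<noteq> m" for n m
  proof (rule ccontr)
    assume "\<not> (ce n \<le> ca m \<or> ce m \<le> ca n)"
    then have h: "ca m < ce n" "ca n < ce m" by auto
    have "max (ca n) (ca m) < min (ce n) (ce m)" using h cab by auto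
    then obtain z where z: "max (ca n) (ca m) < z" "z < min (ce n) (ce m)" using dense_lc by blast
    then have "z \<in> J n" "z \<in> J m" using cab by (auto simp: op_def)
    then show False using assms(3) that by blast
  qed
  define M where "M n = lc_Mu (A \<inter> J n)" for n
  have meas: "lc_outer_measurable (A \<inter> J n)" for n using meas_int[OF A] cab by blast
  have M0: "0 \<le> M n" for n unfolding M_def by (rule Mu_nonneg[OF meas])
  have MJ: "M n \<le> lc_len (J n)" for n
  proof -
    define a :: "nat \<Rightarrow> lc" where "a k = (if k = 0 then ca n else 0)" for k
    define b :: "nat \<Rightarrow> lc" where "b k = (if k = 0 then ce n else 0)" for k
    have ts: "fsum UNIV (\<lambda>k. ilen (a k) (b k))" "tot UNIV (\<lambda>k. ilen (a k) (b k)) = sum (\<lambda>k. ilen (a k) (b k)) {0}"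
      by (rule tot_support[of "{0}"]; simp add: a_def b_def ilen_def)+
    have cov: "A \<inter> J n \<subseteq> (\<Union>k\<in>UNIV. cl (a k) (b k))"
    proof
      fix x assume "x \<in> A \<inter> J n"
      then have "x \<in> cl (a 0) (b 0)" using cab by (auto simp: a_def b_def)
      then show "x \<in> (\<Union>k\<in>UNIV. cl (a k) (b k))" by blast
    qed
    have "M n \<le> tot UNIV (\<lambda>k. ilen (a k) (b k))" unfolding M_def
      by (rule fatten_le[OF meas countable_n cov ts(1)])
    also have "\<dots> = lc_len (J n)" using ts(2) by (simp add: a_def b_def lenJ)
    finally show ?thesis .
  qed
  have fM: "fsum UNIV M" by (rule fsum_dom[OF fJ]) (use M0 MJ in auto)
  define Sg where "Sg = tot UNIV M"
  have limS: "lc_lim (\<lambda>N. sum M {..<N}) Sg"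
    using sums_tot[OF fM] unfolding lc_sums_def Sg_def psum_eq .
  have Sg_ge: "sum f {..<N} \<le> tot UNIV f" if "fsum UNIV f" "\<And>n. 0 \<le> f n" for f :: "nat \<Rightarrow> lc" and N
  proof -
    have un: "{..<N} \<union> {N..} = (UNIV::nat set)" by auto
    have "tot UNIV f = tot ({..<N} \<union> {N..}) f" by (simp add: un)
    also have "\<dots> = tot {..<N} f + tot {N..} f"
      by (rule tot_union) (use that un in auto)
    also have "tot {..<N} f = sum f {..<N}" by (simp add: tot_finite)
    finally show ?thesis using tot_nonneg[OF fsum_subset[OF that(1)], of "{N..}"] that(2) by simp
  qed
  have lower: "Sg \<le> y" if yin: "y \<in> lc_cover_sums B" for y
  proof -
    obtain T' where T': "lc_cover B T'" "y = tot UNIV (\<lambda>n. lc_len (T' n))"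
      using cover_sums_iff[THEN iffD1, OF yin] by blast
    have T'int: "\<forall>n. lc_interval (T' n)" using T'(1) by (simp add: lc_cover_def)
    obtain ta tb where tab: "\<forall>n. ta n < tb n \<and> op (ta n) (tb n) \<subseteq> T' n \<and> T' n \<subseteq> cl (ta n) (tb n) \<and> lc_len (T' n) = tb n - ta n"
      using endpoints_choice[of T'] T'int by blast
    have lenT: "lc_len (T' n) = ilen (ta n) (tb n)" for n using tab by (simp add: ilen_eq less_imp_le)
    have fT: "fsum UNIV (\<lambda>k. ilen (ta k) (tb k))" using cover_fsum[OF T'(1)] by (simp add: lenT)
    define R where "R n k = ilen (max (ta k) (ca n)) (min (tb k) (ce n))" for n k
    have fR: "fsum UNIV (R n)" for n
      by (rule fsum_dom[OF fT]) (auto simp: R_def ilen_nonneg ilen_sub)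
    have MR: "M n \<le> tot UNIV (R n)" for n
    proof -
      have cov: "A \<inter> J n \<subseteq> (\<Union>k\<in>UNIV. cl (max (ta k) (ca n)) (min (tb k) (ce n)))"
      proof
        fix x assume x: "x \<in> A \<inter> J n"
        then have "x \<in> B" by (auto simp: B_def)
        then obtain k where "x \<in> T' k" using T'(1) by (auto simp: lc_cover_def)
        then have "x \<in> cl (ta k) (tb k)" using tab by blast
        moreover have "x \<in> cl (ca n) (ce n)" using x cab by blast
        ultimately show "x \<in> (\<Union>k\<in>UNIV. cl (max (ta k) (ca n)) (min (tb k) (ce n)))" by (auto simp: cl_def)
      qed
      show ?thesis unfolding M_def R_def
        by (rule fatten_le[OF meas countable_n cov]) (use fR[of n] in \<open>simp add: R_def[abs_def]\<close>)
    qed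
    have part: "sum M {..<N} \<le> y" for N
    proof -
      have "sum M {..<N} \<le> (\<Sum>n<N. tot UNIV (R n))" by (rule sum_mono) (rule MR)
      also have "\<dots> = tot UNIV (\<lambda>k. \<Sum>n<N. R n k)" by (rule tot_sum[symmetric]) (auto intro: fR)
      also have "\<dots> \<le> tot UNIV (\<lambda>k. ilen (ta k) (tb k))"
      proof (rule tot_mono)
        show "fsum UNIV (\<lambda>k. \<Sum>n<N. R n k)" by (rule fsum_sum) (auto intro: fR)
        show "fsum UNIV (\<lambda>k. ilen (ta k) (tb k))" by (rule fT)
        fix k :: nat
        have cle: "\<forall>n\<in>{..<N}. ca n \<le> ce n" using cab less_imp_le by blast
        have sepF: "\<forall>n\<in>{..<N}. \<forall>m\<in>{..<N}. n \<noteq> m \<longrightarrow> ce n \<le> ca m \<or> ce m \<le> ca n" using sep by blast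
        show "(\<Sum>n<N. R n k) \<le> ilen (ta k) (tb k)" unfolding R_def
          by (rule FD[OF finite_lessThan cle sepF])
      qed
      also have "\<dots> = y" using T'(2) by (simp add: lenT)
      finally show ?thesis .
    qed
    show ?thesis by (rule lim_le[OF limS part])
  qed
  have upper: "\<exists>x\<in>lc_cover_sums B. x < m'" if "Sg < m'" for m'
  proof -
    define eps where "eps = m' - Sg"
    have "0 < eps" using that by (simp add: eps_def)
    define e1 where "e1 = hf eps"
    define e2 where "e2 = hf e1"
    have e1: "0 < e1" "e1 + e1 = eps" using hf_pos hf_hf \<open>0 < eps\<close> by (auto simp: e1_def)
    have e2: "0 < e2" "e2 + e2 = e1" using hf_pos hf_hf e1 by (auto simp: e2_def)
    from small_lt[OF e1(1)] obtain q where q: "\<forall>z. small z q \<longrightarrow> z < e1 \<and> - e1 < z" by blast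
    have "finite {n. \<not> small (lc_len (J n)) q}" using fJ by (simp add: fsum_def)
    then obtain N where N: "\<forall>n\<in>{n. \<not> small (lc_len (J n)) q}. n < N"
      by (meson finite_nat_bounded lessThan_iff subsetD)
    have tail: "tot {N..} (\<lambda>n. lc_len (J n)) < e1"
    proof -
      have "small (tot {N..} (\<lambda>n. lc_len (J n))) q"
        by (rule tot_small[OF fsum_subset[OF fJ]]) (use N in \<open>auto simp: not_less[symmetric]\<close>)
      then show ?thesis using q by blast
    qed
    define d where "d n = sh (of_nat n + 1) e2" for n :: nat
    note sd = shift_sum[OF e2(1), folded d_def]
    have "\<forall>n. \<exists>C. lc_cover (A \<inter> J n) C \<and> tot UNIV (\<lambda>k. lc_len (C k)) < M n + d n"
      using Mu_approx[OF meas sd(3)] by (simp add: M_def)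
    from choice[OF this] obtain C where C: "\<And>n. lc_cover (A \<inter> J n) (C n)"
      "\<And>n. tot UNIV (\<lambda>k. lc_len (C n k)) < M n + d n" by blast
    have Cint: "\<forall>p. lc_interval ((\<lambda>p. C (fst p) (snd p)) p)" using C(1) by (simp add: lc_cover_def)
    obtain ea eb where eab: "\<forall>p. ea p < eb p \<and> op (ea p) (eb p) \<subseteq> C (fst p) (snd p) \<and> C (fst p) (snd p) \<subseteq> cl (ea p) (eb p)
        \<and> lc_len (C (fst p) (snd p)) = eb p - ea p"
      using endpoints_choice[of "\<lambda>p. C (fst p) (snd p)"] Cint by blast
    have lenC: "lc_len (C n k) = ilen (ea (n, k)) (eb (n, k))" for n k
      using eab[rule_format, of "(n, k)"] by (simp add: ilen_eq less_imp_le)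
    define bl :: "nat \<times> nat \<Rightarrow> lc" where "bl = (\<lambda>(n, k). if n < N then ea (n, k) else if k = 0 then ca n else 0)"
    define br :: "nat \<times> nat \<Rightarrow> lc" where "br = (\<lambda>(n, k). if n < N then eb (n, k) else if k = 0 then ce n else 0)"
    define a where "a p = ilen (bl p) (br p)" for p
    have a_lt: "a (n, k) = lc_len (C n k)" if "n < N" for n k using that by (simp add: a_def bl_def br_def lenC)
    have a_ge0: "a (n, 0) = lc_len (J n)" if "\<not> n < N" for n using that by (simp add: a_def bl_def br_def lenJ)
    have a_ge: "a (n, k) = 0" if "\<not> n < N" "k \<noteq> 0" for n k using that by (simp add: a_def bl_def br_def ilen_def)
    have cov: "B \<subseteq> (\<Union>p\<in>UNIV. cl (bl p) (br p))"
    proof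
      fix x assume "x \<in> B"
      then obtain n where x: "x \<in> A" "x \<in> J n" by (auto simp: B_def)
      show "x \<in> (\<Union>p\<in>UNIV. cl (bl p) (br p))"
      proof (cases "n < N")
        case True
        then obtain k where "x \<in> C n k" using C(1)[of n] x by (auto simp: lc_cover_def)
        then have "x \<in> cl (bl (n, k)) (br (n, k))" using eab True by (auto simp: bl_def br_def)
        then show ?thesis by blast
      next
        case False
        then have "x \<in> cl (bl (n, 0)) (br (n, 0))" using cab x by (auto simp: bl_def br_def)
        then show ?thesis by blast
      qed
    qed
    have fC: "fsum UNIV (\<lambda>k. lc_len (C n k))" for n by (rule cover_fsum[OF C(1)])
    have fa: "fsum UNIV a" unfolding fsum_def
    proof
      fix q'
      have "{p. \<not> small (a p) q'} \<subseteq> (\<Union>n\<in>{..<N}. {n} \<times> {k. \<not> small (lc_len (C n k)) q'})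
          \<union> (\<lambda>n. (n, 0)) ` {n. \<not> small (lc_len (J n)) q'}"
      proof
        fix p assume p: "p \<in> {p. \<not> small (a p) q'}"
        obtain n k where nk: "p = (n, k)" by (cases p)
        show "p \<in> (\<Union>n\<in>{..<N}. {n} \<times> {k. \<not> small (lc_len (C n k)) q'}) \<union> (\<lambda>n. (n, 0)) ` {n. \<not> small (lc_len (J n)) q'}"
        proof (cases "n < N")
          case True thus ?thesis using p nk a_lt by auto
        next
          case False
          show ?thesis
          proof (cases "k = 0")
            case True thus ?thesis using p nk a_ge0 False by auto
          next
            case k: False thus ?thesis using p nk a_ge[OF False k] by auto
          qed
        qed
      qed
      moreover have "finite ((\<Union>n\<in>{..<N}. {n} \<times> {k. \<not> small (lc_len (C n k)) q'})
          \<union> (\<lambda>n. (n, 0)) ` {n. \<not> small (lc_len (J n)) q'})"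
        using fC fJ by (auto simp: fsum_def)
      ultimately show "finite {p \<in> UNIV. \<not> small (a p) q'}" by (simp add: finite_subset)
    qed
    define f where "f n = tot UNIV (\<lambda>k. a (n, k))" for n
    have ff: "fsum UNIV f" unfolding f_def using fsum_Sigma_outer[of UNIV "\<lambda>_. UNIV" a] fa by simp
    have ta: "tot UNIV a = tot UNIV f"
    proof -
      have "tot UNIV a = tot (Sigma UNIV (\<lambda>_. UNIV)) a" by simp
      also have "\<dots> = tot UNIV f" unfolding f_def by (rule tot_Sigma) (use fa in simp)
      finally show ?thesis .
    qed
    have f_lt: "f n = tot UNIV (\<lambda>k. lc_len (C n k))" if "n < N" for n
      unfolding f_def by (rule tot_cong) (use a_lt that in simp)
    have f_ge: "f n = lc_len (J n)" if "\<not> n < N" for n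
    proof -
      have "f n = sum (\<lambda>k. a (n, k)) {0}" unfolding f_def
        by (rule tot_support(2)) (use a_ge that in auto)
      then show ?thesis using a_ge0 that by simp
    qed
    have un: "{..<N} \<union> {N..} = (UNIV::nat set)" by auto
    have "tot UNIV f = tot ({..<N} \<union> {N..}) f" by (simp add: un)
    also have "\<dots> = tot {..<N} f + tot {N..} f"
      by (rule tot_union) (use ff un in auto)
    also have "tot {..<N} f = (\<Sum>n<N. tot UNIV (\<lambda>k. lc_len (C n k)))"
      by (simp add: tot_finite f_lt)
    also have "tot {N..} f = tot {N..} (\<lambda>n. lc_len (J n))" by (rule tot_cong) (simp add: f_ge)
    finally have tf: "tot UNIV f = (\<Sum>n<N. tot UNIV (\<lambda>k. lc_len (C n k))) + tot {N..} (\<lambda>n. lc_len (J n))" .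
    have "(\<Sum>n<N. tot UNIV (\<lambda>k. lc_len (C n k))) \<le> (\<Sum>n<N. M n + d n)"
      by (rule sum_mono) (use C(2) less_imp_le in blast)
    also have "\<dots> = sum M {..<N} + sum d {..<N}" by (simp add: sum.distrib)
    also have "\<dots> \<le> Sg + tot UNIV d"
    proof (rule add_mono)
      show "sum M {..<N} \<le> Sg" using Sg_ge[OF fM M0] by (simp add: Sg_def)
      have "\<And>n. 0 \<le> d n" using sd(3) less_imp_le by blast
      then show "sum d {..<N} \<le> tot UNIV d" using Sg_ge[OF sd(1)] by blast
    qed
    finally have s1: "(\<Sum>n<N. tot UNIV (\<lambda>k. lc_len (C n k))) \<le> Sg + tot UNIV d" .
    have td: "tot UNIV d < e2"
    proof -
      have "0 \<le> tot UNIV d" by (rule tot_nonneg[OF sd(1)]) (use sd(3) less_imp_le in blast)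
      then have "tot UNIV d \<le> tot UNIV d + tot UNIV d" by simp
      then show ?thesis using sd(2) by (rule le_less_trans)
    qed
    have tot_a: "tot UNIV a < Sg + e2 + e1"
    proof -
      have "tot UNIV a \<le> Sg + tot UNIV d + tot {N..} (\<lambda>n. lc_len (J n))" using ta tf s1 by simp
      also have "\<dots> < Sg + e2 + e1" using td tail by (simp add: add_strict_mono)
      finally show ?thesis .
    qed
    have fa': "fsum UNIV (\<lambda>p. ilen (bl p) (br p))" using fa by (simp add: a_def[abs_def])
    from fatten[OF countable_nn cov fa' e2(1)] obtain S where
      S: "lc_cover B S" "tot UNIV (\<lambda>n. lc_len (S n)) < tot UNIV a + e2" by (auto simp: a_def[abs_def])
    have "tot UNIV a + e2 < Sg + e2 + e1 + e2" using tot_a by simp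
    with S(2) have "tot UNIV (\<lambda>n. lc_len (S n)) < Sg + e2 + e1 + e2" by (rule less_trans)
    also have "\<dots> = m'" using e1 e2 by (simp add: eps_def algebra_simps)
    moreover have "tot UNIV (\<lambda>n. lc_len (S n)) \<in> lc_cover_sums B"
      using S(1) by (intro cover_sums_iff[THEN iffD2] exI[of _ S]) simp
    ultimately show ?thesis by blast
  qed
  have inf: "lc_is_inf (lc_cover_sums B) Sg"
    unfolding is_inf_iff
  proof (intro conjI allI impI ballI)
    fix x assume "x \<in> lc_cover_sums B" then show "Sg \<le> x" by (rule lower)
  next
    fix m' assume lb: "\<forall>x\<in>lc_cover_sums B. m' \<le> x"
    show "m' \<le> Sg"
    proof (rule ccontr)
      assume "\<not> m' \<le> Sg"
      then obtain x where "x \<in> lc_cover_sums B" "x < m'" using upper by (meson not_le)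
      with lb show False by (meson not_le)
    qed
  qed
  have "lc_outer_measurable B" unfolding lc_outer_measurable_def using inf by blast
  moreover have "lc_summable (\<lambda>n. lc_Mu (A \<inter> J n))" using fM by (simp add: summable_iff M_def[abs_def])
  moreover have "lc_Mu B = lc_suminf (\<lambda>n. lc_Mu (A \<inter> J n))"
    using Mu_eq[OF inf] suminf_tot[OF fM] by (simp add: Sg_def M_def[abs_def])
  ultimately show ?thesis by (simp add: B_def)
qed


end
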